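(* Let $\vec p=(p_1,\dots,p_n)$, $\vec s=(s_1,\dots,s_n)$ with $1\le p_i,s_i\le\infty$, and $1\le\alpha\le\infty$. The space $(L^{\vec p},L^{\vec s})^{\alpha}(\mathbb R^n)$ is nontrivial (i.e. contains a function that is not almost everywhere zero) if and only if $$\frac1n\sum_{i=1}^n\frac1{s_i}\le\frac1\alpha\le\frac1n\sum_{i=1}^n\frac1{p_i}.$$
   Context: For $\vec p=(p_1,\dots,p_n)$ with $1\le p_i\le\infty$, the mixed-norm Lebesgue space $L^{\vec p}(\mathbb R^n)$ consists of measurable $f$ with $\|f\|_{L^{\vec p}}=\Big(\int_{\mathbb R}\cdots\Big(\int_{\mathbb R}|f(x)|^{p_1}\,dx_1\Big)^{p_2/p_1}\cdots dx_n\Big)^{1/p_n}<\infty$ (usual modification when some $p_i=\infty$). $B(y,r)$ denotes the open ball of center $y$ and radius $r$, $|B|$ its Lebesgue measure, $\chi_E$ the characteristic function of $E$. The space $(L^{\vec p},L^{\vec s})^{\alpha}(\mathbb R^n)$ is the set of $f\in L^1_{loc}(\mathbb R^n)$ with $$\|f\|_{(L^{\vec p},L^{\vec s})^{\alpha}}:=\sup_{r>0}\Big\|\,y\mapsto |B(y,r)|^{\frac1\alpha-\frac1n\sum_{i=1}^n\frac1{p_i}-\frac1n\sum_{i=1}^n\frac1{s_i}}\,\|f\chi_{B(y,r)}\|_{L^{\vec p}}\Big\|_{L^{\vec s}}<\infty,$$ where the outer $L^{\vec s}$-norm is taken in the variable $y$. *)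

theory Defs
  imports "HOL-Analysis.Analysis"
begin

text \<open>Points of R^n are represented as functions nat => real that are extensional
  outside {..<n} (the carrier of the product measure), coordinate x_{i+1} being x i.\<close>

definition Rn :: "nat \<Rightarrow> (nat \<Rightarrow> real) measure" where
  "Rn n = PiM {..<n} (\<lambda>_. lborel)"

definition Rball :: "nat \<Rightarrow> (nat \<Rightarrow> real) \<Rightarrow> real \<Rightarrow> (nat \<Rightarrow> real) set" where
  "Rball n y r = {x \<in> space (Rn n). sqrt (\<Sum>i<n. (x i - y i)^2) < r}"

definition enn_powr :: "ennreal \<Rightarrow> real \<Rightarrow> ennreal" where
  "enn_powr x r = (if x = top then top else ennreal (enn2real x powr r))"

definition Lp1 :: "ereal \<Rightarrow> (real \<Rightarrow> ennreal) \<Rightarrow> ennreal" where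
  "Lp1 p g = (if p = \<infinity> then Inf {c. AE t in lborel. g t \<le> c}
              else enn_powr (\<integral>\<^sup>+ t. enn_powr (g t) (real_of_ereal p) \<partial>lborel)
                            (1 / real_of_ereal p))"

fun mixnorm_aux :: "nat \<Rightarrow> ereal list \<Rightarrow> ((nat \<Rightarrow> real) \<Rightarrow> ennreal) \<Rightarrow> (nat \<Rightarrow> real) \<Rightarrow> ennreal" where
  "mixnorm_aux k [] f = f"
| "mixnorm_aux k (p # ps) f = mixnorm_aux (Suc k) ps (\<lambda>x. Lp1 p (\<lambda>t. f (x(k := t))))"

text \<open>Mixed norm ||f||_{L^ps} on R^n, n = length ps; innermost integral over x_1.\<close>
definition mixnorm_enn :: "ereal list \<Rightarrow> ((nat \<Rightarrow> real) \<Rightarrow> ennreal) \<Rightarrow> ennreal" where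
  "mixnorm_enn ps g = mixnorm_aux 0 ps g (\<lambda>_. undefined)"

definition mixnorm :: "ereal list \<Rightarrow> ((nat \<Rightarrow> real) \<Rightarrow> real) \<Rightarrow> ennreal" where
  "mixnorm ps f = mixnorm_enn ps (\<lambda>x. ennreal \<bar>f x\<bar>)"

definition inv_exp :: "ereal \<Rightarrow> real" where
  "inv_exp p = (if p = \<infinity> then 0 else 1 / real_of_ereal p)"

definition L1loc :: "nat \<Rightarrow> ((nat \<Rightarrow> real) \<Rightarrow> real) set" where
  "L1loc n = {f. f \<in> borel_measurable (Rn n) \<and>
      (\<forall>y\<in>space (Rn n). \<forall>r>0. set_integrable (Rn n) (Rball n y r) f)}"

definition amalgam_norm :: "ereal list \<Rightarrow> ereal list \<Rightarrow> ereal \<Rightarrow> ((nat \<Rightarrow> real) \<Rightarrow> real) \<Rightarrow> ennreal" where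
  "amalgam_norm ps ss \<alpha> f =
     (let n = length ps;
          e = inv_exp \<alpha> - (\<Sum>p\<leftarrow>ps. inv_exp p) / real n - (\<Sum>s\<leftarrow>ss. inv_exp s) / real n
      in SUP r\<in>{0<..}. mixnorm_enn ss (\<lambda>y. ennreal (measure (Rn n) (Rball n y r) powr e)
                                        * (mixnorm ps (\<lambda>x. indicator (Rball n y r) x * f x))))"

definition amalgam_space :: "ereal list \<Rightarrow> ereal list \<Rightarrow> ereal \<Rightarrow> ((nat \<Rightarrow> real) \<Rightarrow> real) set" where
  "amalgam_space ps ss \<alpha> = {f \<in> L1loc (length ps). amalgam_norm ps ss \<alpha> f < \<infinity>}"

end

theory Submission
  imports Defs
begin

lemma enn_powr_0[simp]: "r > 0 \<Longrightarrow> enn_powr 0 r = 0"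
  by (simp add: enn_powr_def)

lemma enn_powr_1[simp]: "enn_powr x 1 = x"
  by (cases x) (auto simp: enn_powr_def)

lemma enn_powr_ennreal: "x \<ge> 0 \<Longrightarrow> enn_powr (ennreal x) r = ennreal (x powr r)"
  by (simp add: enn_powr_def)

lemma enn_powr_top[simp]: "enn_powr top r = top"
  by (simp add: enn_powr_def)

lemma enn_powr_mono: "r \<ge> 0 \<Longrightarrow> x \<le> y \<Longrightarrow> enn_powr x r \<le> enn_powr y r"
  by (cases x; cases y) (auto simp: enn_powr_def top_unique intro!: ennreal_leI powr_mono2)

lemma enn_powr_mult: assumes r: "r > 0" and a: "a < top" shows "enn_powr (a * b) r = enn_powr a r * enn_powr b r"
proof (cases "a = 0")
  case True then show ?thesis using r by simp
next
  case False
  obtain x where x: "a = ennreal x" "x > 0" using False a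
    by (metis ennreal_cases ennreal_less_zero_iff not_gr_zero top.not_eq_extremum)
  show ?thesis
  proof (cases b)
    case (real y)
    then have y: "y \<ge> 0" "b = ennreal y" by auto
    have "a * b = ennreal (x * y)" using x y by (simp add: ennreal_mult)
    then have "enn_powr (a * b) r = ennreal ((x*y) powr r)" using x y by (simp add: enn_powr_ennreal)
    also have "\<dots> = ennreal (x powr r) * ennreal (y powr r)" using x y by (simp add: powr_mult ennreal_mult)
    finally show ?thesis using x y by (simp add: enn_powr_ennreal)
  next
    case top
    then show ?thesis using x r
      by (simp add: enn_powr_def ennreal_mult_top)
  qed
qed

lemma enn_powr_powr: "p > 0 \<Longrightarrow> enn_powr (enn_powr a p) (1/p) = a"
  by (cases a) (auto simp: enn_powr_def powr_powr)

lemma enn_powr_pos: "r > 0 \<Longrightarrow> enn_powr a r = 0 \<longleftrightarrow> a = 0"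
  by (cases a) (auto simp: enn_powr_def)

lemma nn_integral_measurable_below:
  fixes f :: "'a \<Rightarrow> ennreal"
  shows "\<exists>h\<in>borel_measurable M. (\<forall>x. h x \<le> f x) \<and> integral\<^sup>N M h = integral\<^sup>N M f"
proof -
  let ?A = "{g. simple_function M g \<and> g \<le> f}"
  have "(\<lambda>_. 0) \<in> ?A" by (auto simp: le_fun_def)
  then have ne: "?A \<noteq> {}" by blast
  obtain F :: "nat \<Rightarrow> ennreal" where
    F0: "range F \<subseteq> integral\<^sup>S M ` ?A \<and> Sup (integral\<^sup>S M ` ?A) = Sup (range F)"
    using ennreal_SUP_countable_SUP[OF ne, of "integral\<^sup>S M"] by (elim exE) (rule that, assumption)
  note F = conjunct1[OF F0] conjunct2[OF F0]
  have "\<forall>i. \<exists>g. g \<in> ?A \<and> F i = integral\<^sup>S M g" using F(1) by blast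
  then obtain g where g: "\<And>i. g i \<in> ?A" "\<And>i. F i = integral\<^sup>S M (g i)" by metis
  define h where "h x = (SUP i. g i x)" for x
  have hm: "h \<in> borel_measurable M" unfolding h_def
    using g(1) by (intro borel_measurable_SUP) (auto intro: borel_measurable_simple_function)
  have hle: "\<forall>x. h x \<le> f x" using g(1) unfolding h_def by (auto simp: le_fun_def intro!: SUP_least)
  have "integral\<^sup>N M f = Sup (range F)" using F(2) by (simp add: nn_integral_def)
  also have "\<dots> \<le> integral\<^sup>N M h"
  proof (rule SUP_least)
    fix i
    have "F i = integral\<^sup>N M (g i)" using g by (simp add: nn_integral_eq_simple_integral)
    also have "\<dots> \<le> integral\<^sup>N M h" by (rule nn_integral_mono) (auto simp: h_def intro: SUP_upper)
    finally show "F i \<le> integral\<^sup>N M h" .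
  qed
  finally have "integral\<^sup>N M f \<le> integral\<^sup>N M h" .
  moreover have "integral\<^sup>N M h \<le> integral\<^sup>N M f" using hle by (intro nn_integral_mono) auto
  ultimately show ?thesis using hm hle by (intro bexI[of _ h]) auto
qed

lemma nn_integral_cmult_any:
  fixes f :: "'a \<Rightarrow> ennreal"
  assumes c: "c < top"
  shows "(\<integral>\<^sup>+x. c * f x \<partial>M) = c * integral\<^sup>N M f"
proof (cases "c = 0")
  case True then show ?thesis by simp
next
  case False
  obtain h where h: "h \<in> borel_measurable M" "\<forall>x. h x \<le> f x" "integral\<^sup>N M h = integral\<^sup>N M f"
    using nn_integral_measurable_below by blast
  obtain h' where h': "h' \<in> borel_measurable M" "\<forall>x. h' x \<le> c * f x" "integral\<^sup>N M h' = (\<integral>\<^sup>+x. c * f x \<partial>M)"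
    using nn_integral_measurable_below[of M "\<lambda>x. c * f x"] by blast
  have "c * integral\<^sup>N M f = (\<integral>\<^sup>+x. c * h x \<partial>M)" using h by (simp add: nn_integral_cmult)
  also have "\<dots> \<le> (\<integral>\<^sup>+x. c * f x \<partial>M)" using h by (intro nn_integral_mono mult_left_mono) auto
  finally have 1: "c * integral\<^sup>N M f \<le> (\<integral>\<^sup>+x. c * f x \<partial>M)" .
  have eq: "h' x = c * (h' x / c)" for x using False c
    by (metis ennreal_times_divide mult.commute mult_divide_eq_ennreal top.not_eq_extremum)
  have le: "h' x / c \<le> f x" for x using h'(2) False c
    by (metis divide_le_posI_ennreal mult.commute not_gr_zero top.not_eq_extremum)
  have "(\<integral>\<^sup>+x. c * f x \<partial>M) = (\<integral>\<^sup>+x. c * (h' x / c) \<partial>M)" using h'(3) eq by simp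
  also have "\<dots> = c * (\<integral>\<^sup>+x. h' x / c \<partial>M)" using h' by (simp add: nn_integral_cmult)
  also have "\<dots> \<le> c * integral\<^sup>N M f" using le by (intro nn_integral_mono mult_left_mono) auto
  finally have 2: "(\<integral>\<^sup>+x. c * f x \<partial>M) \<le> c * integral\<^sup>N M f" .
  show ?thesis using 1 2 by (rule antisym[rotated])
qed

lemma enn_powr_less_top: "x < top \<Longrightarrow> enn_powr x r < top"
  by (simp add: enn_powr_def)

lemma AE_le_Inf:
  fixes g :: "'a \<Rightarrow> ennreal"
  shows "AE t in M. g t \<le> Inf {d. AE t in M. g t \<le> d}"
proof -
  let ?S = "{d. AE t in M. g t \<le> d}"
  have "top \<in> ?S" by simp
  then have ne: "?S \<noteq> {}" by blast
  obtain F :: "nat \<Rightarrow> ennreal" where F0: "decseq F \<and> range F \<subseteq> ?S \<and> Inf ?S = (INF i. F i)"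
    using ennreal_Inf_countable_INF[OF ne] by (elim exE) (rule that, assumption)
  then have "\<forall>i. AE t in M. g t \<le> F i" by blast
  then have "AE t in M. \<forall>i. g t \<le> F i" by (simp add: AE_all_countable)
  then show ?thesis
    by eventually_elim (use F0 in \<open>auto intro: INF_greatest\<close>)
qed

lemma ereal_ge1_cases:
  assumes "(1::ereal) \<le> p"
  obtains "p = \<infinity>" | r where "p = ereal r" "r \<ge> 1"
  using assms by (cases p) auto

lemma Lp1_fin: "p = ereal r \<Longrightarrow> Lp1 p g = enn_powr (\<integral>\<^sup>+ t. enn_powr (g t) r \<partial>lborel) (1 / r)"
  by (simp add: Lp1_def)

lemma Lp1_inf: "Lp1 \<infinity> g = Inf {c. AE t in lborel. g t \<le> c}"
  by (simp add: Lp1_def)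

lemma Lp1_mono:
  assumes p: "1 \<le> p" and le: "\<And>t. g t \<le> h t"
  shows "Lp1 p g \<le> Lp1 p h"
  using p
proof (cases rule: ereal_ge1_cases)
  case 1
  have "{c. AE t in lborel. h t \<le> c} \<subseteq> {c. AE t in lborel. g t \<le> c}"
    using le by (auto elim: AE_mp intro: order_trans)
  then show ?thesis using 1 by (simp add: Lp1_inf Inf_superset_mono)
next
  case (2 r)
  then show ?thesis
    by (simp add: Lp1_fin) (intro enn_powr_mono nn_integral_mono, auto intro: le)
qed

lemma Lp1_one: "Lp1 1 g = (\<integral>\<^sup>+ t. g t \<partial>lborel)"
  by (simp add: Lp1_def one_ereal_def)

lemma Lp1_cmult:
  assumes p: "1 \<le> p" and c: "c < top"
  shows "Lp1 p (\<lambda>t. c * g t) = c * Lp1 p g"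
  using p
proof (cases rule: ereal_ge1_cases)
  case 1
  show ?thesis
  proof (cases "c = 0")
    case True
    then show ?thesis using 1 by (simp add: Lp1_inf bot_ennreal)
  next
    case False
    let ?S = "{d. AE t in lborel. g t \<le> d}"
    let ?S' = "{d. AE t in lborel. c * g t \<le> d}"
    have "AE t in lborel. c * g t \<le> c * Inf ?S"
      using AE_le_Inf[of g lborel] by eventually_elim (auto intro: mult_left_mono)
    then have le1: "Inf ?S' \<le> c * Inf ?S" by (auto intro: Inf_lower)
    have "c * Inf ?S \<le> d" if "d \<in> ?S'" for d
    proof -
      have cx: "x \<le> d / c" if "c * x \<le> d" for x
      proof -
        have "x = c * x / c" using False c
          by (metis mult.commute mult_divide_eq_ennreal top.not_eq_extremum)
        also have "\<dots> \<le> d / c" using that by (rule divide_right_mono_ennreal)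
        finally show ?thesis .
      qed
      have "AE t in lborel. g t \<le> d / c"
        using that by (simp add: cx eventually_mono)
      then have "d / c \<in> ?S" by simp
      then have "c * Inf ?S \<le> c * (d / c)" by (intro mult_left_mono Inf_lower) auto
      also have "\<dots> = d" using False c
        by (metis ennreal_times_divide mult.commute mult_divide_eq_ennreal top.not_eq_extremum)
      finally show ?thesis .
    qed
    then have "c * Inf ?S \<le> Inf ?S'" by (auto intro: Inf_greatest)
    then show ?thesis using le1 1 by (simp add: Lp1_inf)
  qed
next
  case (2 r)
  have r: "r > 0" using 2 by simp
  have "(\<integral>\<^sup>+ t. enn_powr (c * g t) r \<partial>lborel) = (\<integral>\<^sup>+ t. enn_powr c r * enn_powr (g t) r \<partial>lborel)"
    using r c by (simp add: enn_powr_mult)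
  also have "\<dots> = enn_powr c r * (\<integral>\<^sup>+ t. enn_powr (g t) r \<partial>lborel)"
    using c by (intro nn_integral_cmult_any enn_powr_less_top)
  finally show ?thesis using 2 r c
    by (simp add: Lp1_fin enn_powr_mult enn_powr_less_top enn_powr_powr)
qed

lemma mixnorm_mono:
  assumes "\<forall>p\<in>set ps. 1 \<le> p" "\<And>x. g x \<le> h x"
  shows "mixnorm_aux k ps g z \<le> mixnorm_aux k ps h z"
  using assms
proof (induction ps arbitrary: k g h)
  case Nil then show ?case by simp
next
  case (Cons p ps)
  show ?case using Cons.prems
    by (simp del: mixnorm_aux.simps(1)) (intro Cons.IH Lp1_mono, auto)
qed

lemma mixnorm_cmult:
  assumes "\<forall>p\<in>set ps. 1 \<le> p" "c < top"
  shows "mixnorm_aux k ps (\<lambda>x. c * g x) z = c * mixnorm_aux k ps g z"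
  using assms
proof (induction ps arbitrary: k g)
  case Nil then show ?case by simp
next
  case (Cons p ps)
  have "mixnorm_aux k (p # ps) (\<lambda>x. c * g x) z = mixnorm_aux (Suc k) ps (\<lambda>x. c * Lp1 p (\<lambda>t. g (x(k := t)))) z"
    using Cons.prems by (simp add: Lp1_cmult)
  also have "\<dots> = c * mixnorm_aux (Suc k) ps (\<lambda>x. Lp1 p (\<lambda>t. g (x(k := t)))) z"
    using Cons.prems by (intro Cons.IH) auto
  finally show ?case by simp
qed

lemma mixnorm_zero:
  assumes "\<forall>p\<in>set ps. 1 \<le> p"
  shows "mixnorm_aux k ps (\<lambda>x. 0) z = 0"
  using mixnorm_cmult[OF assms, of 0 k "\<lambda>_. 0" z] by simp

lemma enn_powr_indicator: "r > 0 \<Longrightarrow> enn_powr (indicator A t) r = indicator A t"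
  by (simp add: indicator_def enn_powr_def)

lemma Lp1_indicator:
  assumes p: "1 \<le> p" and ab: "a < b"
  shows "Lp1 p (indicator {a..b}) \<le> ennreal ((b - a) powr inv_exp p)"
  using p
proof (cases rule: ereal_ge1_cases)
  case 1
  have "AE t in lborel. (indicator {a..b} t :: ennreal) \<le> 1" by (simp add: indicator_def)
  then have "Lp1 p (indicator {a..b}) \<le> 1" using 1 by (simp add: Lp1_inf Inf_lower)
  then show ?thesis using 1 ab by (simp add: inv_exp_def)
next
  case (2 r)
  then have "Lp1 p (indicator {a..b}) = enn_powr (ennreal (b - a)) (1/r)"
    using ab by (simp add: Lp1_fin enn_powr_indicator)
  then show ?thesis using 2 ab by (simp add: enn_powr_ennreal inv_exp_def)
qed

definition boxset :: "nat set \<Rightarrow> (nat \<Rightarrow> real) \<Rightarrow> (nat \<Rightarrow> real) \<Rightarrow> (nat \<Rightarrow> real) set" where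
  "boxset I a b = {x. \<forall>i\<in>I. a i \<le> x i \<and> x i \<le> b i}"

lemma indicator_boxset_upd:
  assumes "k \<notin> I"
  shows "(indicator (boxset (insert k I) a b) (x(k := t)) :: ennreal)
         = indicator (boxset I a b) x * indicator {a k..b k} t"
  using assms by (auto simp: boxset_def indicator_def)

lemma mixnorm_box_ub:
  assumes "\<forall>p\<in>set ps. 1 \<le> p" "\<forall>i\<in>{k..<k+length ps}. a i < b i"
    and "\<And>x. g x \<le> c * indicator (boxset {k..<k+length ps} a b) x" "c < top"
  shows "mixnorm_aux k ps g z \<le> c * ennreal (\<Prod>j<length ps. (b (k+j) - a (k+j)) powr inv_exp (ps!j))"
  using assms
proof (induction ps arbitrary: k g c)
  case Nil
  then show ?case using Nil.prems(3)[of z] by (simp add: boxset_def)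
next
  case (Cons p ps)
  let ?L = "(b k - a k) powr inv_exp p"
  let ?B = "boxset {Suc k..<Suc k+length ps} a b"
  have p: "1 \<le> p" using Cons.prems by simp
  have ins: "{k..<k + length (p # ps)} = insert k {Suc k..<Suc k+length ps}" by auto
  have "Lp1 p (\<lambda>t. g (x(k := t))) \<le> (c * ennreal ?L) * indicator ?B x" for x
  proof -
    have "g (x(k := t)) \<le> (c * indicator ?B x) * indicator {a k..b k} t" for t
    proof -
      have "g (x(k := t)) \<le> c * indicator (boxset (insert k {Suc k..<Suc k+length ps}) a b) (x(k := t))"
        using Cons.prems(3)[of "x(k:=t)"] by (simp only: ins)
      also have "\<dots> = (c * indicator ?B x) * indicator {a k..b k} t"
        by (subst indicator_boxset_upd) (auto simp: mult.assoc)
      finally show ?thesis .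
    qed
    then have "Lp1 p (\<lambda>t. g (x(k := t))) \<le> Lp1 p (\<lambda>t. (c * indicator ?B x) * indicator {a k..b k} t)"
      using p by (intro Lp1_mono) auto
    also have "\<dots> = (c * indicator ?B x) * Lp1 p (indicator {a k..b k})"
      using p Cons.prems(4) by (intro Lp1_cmult) (auto simp: indicator_def)
    also have "\<dots> \<le> (c * indicator ?B x) * ennreal ?L"
      using Cons.prems(2) p by (intro mult_left_mono Lp1_indicator) auto
    finally show ?thesis by (simp add: mult_ac)
  qed
  note bnd = this
  have "mixnorm_aux (Suc k) ps (\<lambda>x. Lp1 p (\<lambda>t. g (x(k := t)))) z
      \<le> (c * ennreal ?L) * ennreal (\<Prod>j<length ps. (b (Suc k+j) - a (Suc k+j)) powr inv_exp (ps!j))"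
  proof (rule Cons.IH)
    show "\<forall>p\<in>set ps. 1 \<le> p" using Cons.prems by simp
    show "\<forall>i\<in>{Suc k..<Suc k + length ps}. a i < b i" using Cons.prems by simp
    show "c * ennreal ?L < top" using Cons.prems by (simp add: ennreal_mult_less_top)
  qed (rule bnd)
  also have "\<dots> = c * ennreal (\<Prod>j<length (p#ps). (b (k+j) - a (k+j)) powr inv_exp ((p#ps)!j))"
    by (simp add: prod.lessThan_Suc_shift ennreal_mult' mult.assoc del: prod.lessThan_Suc)
  finally show ?case by simp
qed

lemma measurable_enn_powr[measurable (raw)]:
  assumes [measurable]: "f \<in> borel_measurable M"
  shows "(\<lambda>x. enn_powr (f x) r) \<in> borel_measurable M"
  unfolding enn_powr_def by measurable

lemma real_young:
  fixes u l r :: real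
  assumes u: "u \<ge> 0" and l: "l > 0" and r: "r > 1"
  shows "u \<le> u powr r / (r * l powr (r - 1)) + l * (1 - 1/r)"
proof -
  define q where "q = r / (r - 1)"
  have q: "q > 1" "1/r + 1/q = 1" using r by (auto simp: q_def field_simps)
  have "(u / l) * 1 \<le> (u / l) powr r / r + 1 powr q / q"
    using Youngs_inequality[OF r q(1) q(2), of "u/l" 1] u l by simp
  then have "u / l \<le> (u / l) powr r / r + (1 - 1/r)" using q by simp
  then have i: "l * (u / l) \<le> l * ((u / l) powr r / r + (1 - 1/r))"
    using l by (intro mult_left_mono) auto
  have e: "l * ((u / l) powr r / r) = u powr r / (r * l powr (r - 1))"
    using l u r by (simp add: powr_divide powr_diff field_simps)
  have "u = l * (u / l)" using l by simp
  also have "\<dots> \<le> l * ((u / l) powr r / r) + l * (1 - 1/r)" using i by (simp add: distrib_left)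
  finally show ?thesis using e by simp
qed

lemma real_holder_arith:
  fixes x L r :: real
  assumes x: "x > 0" and L: "L > 0" and r: "r > 1"
  shows "x / (r * (x powr (1/r) * L powr (-1/r)) powr (r - 1)) + (x powr (1/r) * L powr (-1/r)) * (1 - 1/r) * L
         = L powr (1 - 1/r) * x powr (1/r)"
proof -
  define A where "A = x powr (1/r)"
  define P where "P = A powr (r - 1)"
  define Q where "Q = L powr ((1-r)/r)"
  define R where "R = L powr (1 - 1/r)"
  have A: "A > 0" using x by (simp add: A_def)
  have PQR: "P > 0" "Q > 0" "R > 0" using A L by (auto simp: P_def Q_def R_def)
  have xA: "x = A * P"
  proof -
    have "A * P = A powr 1 * A powr (r - 1)" using A by (simp add: P_def)
    also have "\<dots> = A powr (1 + (r - 1))" by (simp only: powr_add)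
    also have "\<dots> = (x powr (1/r)) powr r" by (simp add: A_def)
    also have "\<dots> = x" using x r by (simp add: powr_powr)
    finally show ?thesis by simp
  qed
  have QR: "Q * R = 1"
  proof -
    have "Q * R = L powr ((1-r)/r + (1 - 1/r))" by (simp add: Q_def R_def powr_add)
    also have "(1-r)/r + (1 - 1/r) = 0" using r by (simp add: field_simps)
    finally show ?thesis using L by simp
  qed
  have ee: "-1/r * (r - 1) = (1-r)/r" using r by (simp add: field_simps)
  have "(A * L powr (-1/r)) powr (r - 1) = A powr (r - 1) * (L powr (-1/r)) powr (r - 1)"
    using A L by (simp add: powr_mult)
  also have "(L powr (-1/r)) powr (r - 1) = L powr (-1/r * (r - 1))" by (rule powr_powr)
  finally have lp: "(A * L powr (-1/r)) powr (r - 1) = P * Q" by (simp only: ee P_def Q_def)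
  have lL: "L powr (-1/r) * L = R"
  proof -
    have a: "L powr (-1/r + 1) = L powr (-1/r) * L powr 1" by (rule powr_add)
    have b: "L powr 1 = L" using L by simp
    have c: "-1/r + 1 = 1 - 1/r" by simp
    show ?thesis using a unfolding b c R_def by simp
  qed
  have "x / (r * (A * L powr (-1/r)) powr (r - 1)) + (A * L powr (-1/r)) * (1 - 1/r) * L
        = A * P / (r * (P * Q)) + A * (L powr (-1/r) * L) * (1 - 1/r)"
    unfolding lp xA by (simp add: mult_ac)
  also have "\<dots> = A * P / (r * (P * Q)) + A * R * (1 - 1/r)" by (simp only: lL)
  also have "A * P / (r * (P * Q)) = A * R / r"
    using PQR QR r by (simp add: field_simps)
  also have "A * R / r + A * R * (1 - 1/r) = R * A" using r by (simp add: field_simps)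
  finally show ?thesis by (simp add: A_def R_def)
qed

lemma holder1_meas:
  fixes h :: "real \<Rightarrow> ennreal"
  assumes hm[measurable]: "h \<in> borel_measurable lborel" and supp: "\<And>t. t \<notin> {a..b} \<Longrightarrow> h t = 0"
    and ab: "a < b" and r: "r > 1"
  shows "(\<integral>\<^sup>+t. h t \<partial>lborel) \<le> ennreal ((b - a) powr (1 - 1/r)) * enn_powr (\<integral>\<^sup>+t. enn_powr (h t) r \<partial>lborel) (1/r)"
proof -
  define L where "L = b - a"
  have L: "L > 0" using ab by (simp add: L_def)
  define X where "X = (\<integral>\<^sup>+t. enn_powr (h t) r \<partial>lborel)"
  have Lpos: "ennreal (L powr (1 - 1/r)) > 0" using L by simp
  consider "X = top" | "X = 0" | x where "X = ennreal x" "x > 0"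
    by (metis ennreal_cases ennreal_less_zero_iff not_gr_zero)
  then show ?thesis
  proof cases
    case 1
    then show ?thesis using Lpos r by (simp add: X_def[symmetric] L_def[symmetric] ennreal_mult_top)
  next
    case 2
    then have "AE t in lborel. enn_powr (h t) r = 0" unfolding X_def
      by (subst (asm) nn_integral_0_iff_AE) auto
    then have "AE t in lborel. h t = 0" using r by (auto simp: enn_powr_pos elim: eventually_mono)
    then have "(\<integral>\<^sup>+t. h t \<partial>lborel) = 0" by (simp add: nn_integral_0_iff_AE)
    then show ?thesis by simp
  next
    case (3 x)
    define A where "A = x powr (1/r)"
    define l where "l = A * L powr (-1/r)"
    have A: "A > 0" using 3 by (simp add: A_def)
    have l: "l > 0" using A L by (simp add: l_def)
    define \<alpha> where "\<alpha> = 1 / (r * l powr (r - 1))"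
    define \<beta> where "\<beta> = l * (1 - 1/r)"
    have \<alpha>: "\<alpha> > 0" using l r by (simp add: \<alpha>_def)
    have \<beta>: "\<beta> \<ge> 0" using l r by (simp add: \<beta>_def)
    have pw: "h t \<le> ennreal \<alpha> * enn_powr (h t) r + ennreal \<beta> * indicator {a..b} t" for t
    proof (cases "t \<in> {a..b}")
      case False then show ?thesis using supp by simp
    next
      case True
      show ?thesis
      proof (cases "h t")
        case (real u)
        have "u \<le> u powr r / (r * l powr (r - 1)) + l * (1 - 1/r)"
          using real_young[of u l r] real l r by simp
        then have "u \<le> \<alpha> * u powr r + \<beta>" by (simp add: \<alpha>_def \<beta>_def)
        then have "ennreal u \<le> ennreal (\<alpha> * u powr r + \<beta>)" by (rule ennreal_leI)
        also have "\<dots> = ennreal \<alpha> * ennreal (u powr r) + ennreal \<beta>"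
          using \<alpha> \<beta> by (simp add: ennreal_plus ennreal_mult)
        finally show ?thesis using real True by (simp add: enn_powr_ennreal)
      next
        case top
        then show ?thesis using \<alpha> by (simp add: ennreal_mult_top)
      qed
    qed
    have "(\<integral>\<^sup>+t. h t \<partial>lborel) \<le> (\<integral>\<^sup>+t. ennreal \<alpha> * enn_powr (h t) r + ennreal \<beta> * indicator {a..b} t \<partial>lborel)"
      using pw by (intro nn_integral_mono) auto
    also have "\<dots> = ennreal \<alpha> * X + ennreal \<beta> * ennreal L"
      by (subst nn_integral_add) (auto simp: nn_integral_cmult X_def L_def ab less_imp_le)
    also have "\<dots> = ennreal (\<alpha> * x + \<beta> * L)"
      using 3 \<alpha> \<beta> L by (simp add: ennreal_plus ennreal_mult)
    also have "\<alpha> * x + \<beta> * L = L powr (1 - 1/r) * x powr (1/r)"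
      using real_holder_arith[of x L r] 3 L r by (simp add: \<alpha>_def \<beta>_def l_def A_def)
    also have "ennreal (L powr (1 - 1/r) * x powr (1/r)) = ennreal (L powr (1 - 1/r)) * enn_powr X (1/r)"
      using 3 by (simp add: enn_powr_ennreal ennreal_mult)
    finally show ?thesis by (simp add: X_def L_def)
  qed
qed

lemma holder1:
  fixes g :: "real \<Rightarrow> ennreal"
  assumes p: "1 \<le> p" and supp: "\<And>t. t \<notin> {a..b} \<Longrightarrow> g t = 0" and ab: "a < b"
  shows "(\<integral>\<^sup>+t. g t \<partial>lborel) \<le> ennreal ((b - a) powr (1 - inv_exp p)) * Lp1 p g"
  using p
proof (cases rule: ereal_ge1_cases)
  case 1
  let ?E = "Lp1 p g"
  have "AE t in lborel. g t \<le> ?E" using 1 AE_le_Inf[of g lborel] by (simp add: Lp1_inf)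
  then have "AE t in lborel. g t \<le> ?E * indicator {a..b} t"
    by eventually_elim (use supp in \<open>auto simp: indicator_def\<close>)
  then have "(\<integral>\<^sup>+t. g t \<partial>lborel) \<le> (\<integral>\<^sup>+t. ?E * indicator {a..b} t \<partial>lborel)"
    by (rule nn_integral_mono_AE)
  also have "\<dots> = ?E * ennreal (b - a)" using ab by (simp add: nn_integral_cmult_indicator)
  finally show ?thesis using 1 ab by (simp add: inv_exp_def mult.commute)
next
  case (2 r)
  show ?thesis
  proof (cases "r = 1")
    case True
    then show ?thesis using 2 ab by (simp add: inv_exp_def Lp1_fin)
  next
    case False
    then have r: "r > 1" using 2 by simp
    obtain h where h: "h \<in> borel_measurable lborel" "\<forall>x. h x \<le> g x" "integral\<^sup>N lborel h = integral\<^sup>N lborel g"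
      using nn_integral_measurable_below[of lborel g] by blast
    have hs: "h t = 0" if "t \<notin> {a..b}" for t using h(2) supp[OF that] by (metis le_zero_eq)
    have "(\<integral>\<^sup>+t. g t \<partial>lborel) = (\<integral>\<^sup>+t. h t \<partial>lborel)" using h(3) by simp
    also have "\<dots> \<le> ennreal ((b - a) powr (1 - 1/r)) * enn_powr (\<integral>\<^sup>+t. enn_powr (h t) r \<partial>lborel) (1/r)"
      using holder1_meas[OF h(1) hs ab r] by simp
    also have "\<dots> \<le> ennreal ((b - a) powr (1 - 1/r)) * enn_powr (\<integral>\<^sup>+t. enn_powr (g t) r \<partial>lborel) (1/r)"
      using r h(2) by (intro mult_left_mono enn_powr_mono nn_integral_mono) auto
    finally show ?thesis using 2 by (simp add: inv_exp_def Lp1_fin)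
  qed
qed

lemma Lp1_zero: "1 \<le> p \<Longrightarrow> Lp1 p (\<lambda>_. 0) = 0"
  using Lp1_cmult[of p 0 "\<lambda>_. 0"] by simp

lemma mixnorm_holder:
  assumes "\<forall>p\<in>set ps. 1 \<le> p" "\<forall>i\<in>{k..<k+length ps}. a i < b i"
    and "\<And>x. x \<notin> boxset {k..<k+length ps} a b \<Longrightarrow> g x = 0"
  shows "mixnorm_aux k (replicate (length ps) 1) g z
     \<le> ennreal (\<Prod>j<length ps. (b (k+j) - a (k+j)) powr (1 - inv_exp (ps!j))) * mixnorm_aux k ps g z"
  using assms
proof (induction ps arbitrary: k g)
  case Nil
  then show ?case by simp
next
  case (Cons p ps)
  let ?c = "(b k - a k) powr (1 - inv_exp p)"
  let ?h = "\<lambda>x. Lp1 p (\<lambda>t. g (x(k := t)))"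
  have p: "1 \<le> p" using Cons.prems by simp
  have ins: "{k..<k + length (p # ps)} = insert k {Suc k..<Suc k+length ps}" by auto
  have ones: "\<forall>p\<in>set (replicate (length ps) (1::ereal)). 1 \<le> p" by simp
  have pw: "Lp1 1 (\<lambda>t. g (x(k := t))) \<le> ennreal ?c * ?h x" for x
  proof -
    have "g (x(k := t)) = 0" if "t \<notin> {a k..b k}" for t
    proof (rule Cons.prems(3))
      show "x(k := t) \<notin> boxset {k..<k + length (p # ps)} a b"
        using that by (auto simp: boxset_def)
    qed
    then show ?thesis unfolding Lp1_one using p Cons.prems(2) by (intro holder1) auto
  qed
  have "mixnorm_aux k (replicate (length (p # ps)) 1) g z
      = mixnorm_aux (Suc k) (replicate (length ps) 1) (\<lambda>x. Lp1 1 (\<lambda>t. g (x(k := t)))) z" by simp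
  also have "\<dots> \<le> mixnorm_aux (Suc k) (replicate (length ps) 1) (\<lambda>x. ennreal ?c * ?h x) z"
    using ones pw by (rule mixnorm_mono)
  also have "\<dots> = ennreal ?c * mixnorm_aux (Suc k) (replicate (length ps) 1) ?h z"
    using ones by (intro mixnorm_cmult) auto
  also have "\<dots> \<le> ennreal ?c * (ennreal (\<Prod>j<length ps. (b (Suc k+j) - a (Suc k+j)) powr (1 - inv_exp (ps!j))) * mixnorm_aux (Suc k) ps ?h z)"
  proof (intro mult_left_mono Cons.IH)
    show "\<forall>p\<in>set ps. 1 \<le> p" using Cons.prems by simp
    show "\<forall>i\<in>{Suc k..<Suc k + length ps}. a i < b i" using Cons.prems by simp
    fix x assume x: "x \<notin> boxset {Suc k..<Suc k + length ps} a b"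
    obtain i where i: "i \<in> {Suc k..<Suc k + length ps}" "\<not> (a i \<le> x i \<and> x i \<le> b i)"
      using x by (auto simp: boxset_def)
    have "g (x(k := t)) = 0" for t
    proof (rule Cons.prems(3))
      show "x(k := t) \<notin> boxset {k..<k + length (p # ps)} a b"
      proof
        assume "x(k := t) \<in> boxset {k..<k + length (p # ps)} a b"
        then have all: "\<forall>j\<in>{k..<k + length (p # ps)}. a j \<le> (x(k := t)) j \<and> (x(k := t)) j \<le> b j"
          by (simp only: boxset_def mem_Collect_eq)
        have im: "i \<in> {k..<k + length (p # ps)}" using i(1) by auto
        have "a i \<le> (x(k := t)) i \<and> (x(k := t)) i \<le> b i" using bspec[OF all im] .
        then show False using i by auto
      qed
    qed
    then show "?h x = 0" using Lp1_zero[OF p] by simp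
  qed simp
  also have "\<dots> = ennreal (\<Prod>j<length (p#ps). (b (k+j) - a (k+j)) powr (1 - inv_exp ((p#ps)!j))) * mixnorm_aux k (p # ps) g z"
    by (simp add: prod.lessThan_Suc_shift ennreal_mult' mult.assoc del: prod.lessThan_Suc)
  finally show ?case .
qed

definition mg :: "nat set \<Rightarrow> (nat \<Rightarrow> real) \<Rightarrow> (nat \<Rightarrow> real) \<Rightarrow> (nat \<Rightarrow> real)" where
  "mg I w z = (\<lambda>i. if i \<in> I then w i else z i)"

lemma mg_upd: "k \<notin> J \<Longrightarrow> (mg J w z)(k := t) = mg (insert k J) (w(k := t)) z"
  by (auto simp: mg_def fun_eq_iff)

interpretation lb: product_sigma_finite "\<lambda>_::nat. lborel" by standard

lemma mixnorm_ones_integral: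
  fixes g :: "(nat \<Rightarrow> real) \<Rightarrow> ennreal"
  assumes "(\<lambda>w. g (mg {k..<k+m} w z)) \<in> borel_measurable (PiM {k..<k+m} (\<lambda>_. lborel))"
  shows "mixnorm_aux k (replicate m 1) g z = (\<integral>\<^sup>+w. g (mg {k..<k+m} w z) \<partial>PiM {k..<k+m} (\<lambda>_. lborel))"
  using assms
proof (induction m arbitrary: k g)
  case 0
  have "mg {} (\<lambda>_. undefined) z = z" by (simp add: mg_def)
  then show ?case by (simp add: PiM_empty nn_integral_count_space_finite)
next
  case (Suc m)
  define J where "J = {Suc k..<Suc k+m}"
  have I: "{k..<k + Suc m} = insert k J" "k \<notin> J" "finite J" by (auto simp: J_def)
  define F where "F = (\<lambda>w. g (mg (insert k J) w z))"
  have Fm[measurable]: "F \<in> borel_measurable (PiM (insert k J) (\<lambda>_. lborel))"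
    using Suc.prems unfolding F_def I(1) .
  have eq: "Lp1 1 (\<lambda>t. g ((mg J w z)(k := t))) = (\<integral>\<^sup>+t. F (w(k := t)) \<partial>lborel)" for w
    by (simp add: Lp1_one mg_upd[OF I(2)] F_def)
  have "(\<lambda>(w, t). F (w(k := t))) \<in> borel_measurable (PiM J (\<lambda>_. lborel) \<Otimes>\<^sub>M lborel)"
    by measurable
  then have m2: "(\<lambda>w. \<integral>\<^sup>+t. F (w(k := t)) \<partial>lborel) \<in> borel_measurable (PiM J (\<lambda>_. lborel))"
    by (rule lborel.borel_measurable_nn_integral)
  have "mixnorm_aux k (replicate (Suc m) 1) g z
      = mixnorm_aux (Suc k) (replicate m 1) (\<lambda>x. Lp1 1 (\<lambda>t. g (x(k := t)))) z" by simp
  also have "\<dots> = (\<integral>\<^sup>+w. Lp1 1 (\<lambda>t. g ((mg J w z)(k := t))) \<partial>PiM J (\<lambda>_. lborel))"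
  proof -
    have m3: "(\<lambda>w. Lp1 1 (\<lambda>t. g ((mg J w z)(k := t)))) \<in> borel_measurable (PiM J (\<lambda>_. lborel))"
      unfolding eq by (rule m2)
    show ?thesis unfolding J_def by (rule Suc.IH) (use m3 in \<open>simp only: J_def\<close>)
  qed
  also have "\<dots> = (\<integral>\<^sup>+w. \<integral>\<^sup>+t. F (w(k := t)) \<partial>lborel \<partial>PiM J (\<lambda>_. lborel))"
    by (simp add: eq)
  also have "\<dots> = (\<integral>\<^sup>+w. F w \<partial>PiM (insert k J) (\<lambda>_. lborel))"
    by (rule lb.product_nn_integral_insert[symmetric]) (use I Fm in auto)
  finally show ?case unfolding F_def I(1) .
qed

lemma mg_space: "w \<in> space (Rn n) \<Longrightarrow> mg {0..<n} w (\<lambda>_. undefined) = w"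
  by (auto simp: mg_def Rn_def space_PiM PiE_def extensional_def fun_eq_iff)

lemma holder_Rn:
  assumes ps: "\<forall>p\<in>set ps. 1 \<le> p" "length ps = n" and ab: "\<forall>i<n. a i < b i"
    and gm: "g \<in> borel_measurable (Rn n)"
    and supp: "\<And>x. x \<notin> boxset {..<n} a b \<Longrightarrow> g x = 0"
  shows "(\<integral>\<^sup>+x. g x \<partial>Rn n) \<le> ennreal (\<Prod>j<n. (b j - a j) powr (1 - inv_exp (ps!j))) * mixnorm_enn ps g"
proof -
  have sp: "{0..<n} = {..<n}" by auto
  have m: "(\<lambda>w. g (mg {0..<0+n} w (\<lambda>_. undefined))) \<in> borel_measurable (PiM {0..<0+n} (\<lambda>_. lborel))"
  proof -
    have "(\<lambda>w. g (mg {0..<n} w (\<lambda>_. undefined))) \<in> borel_measurable (Rn n)"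
      using gm by (rule measurable_cong[THEN iffD2, rotated]) (simp add: mg_space)
    then show ?thesis by (simp add: Rn_def sp)
  qed
  have "(\<integral>\<^sup>+x. g x \<partial>Rn n) = (\<integral>\<^sup>+w. g (mg {0..<0+n} w (\<lambda>_. undefined)) \<partial>PiM {0..<0+n} (\<lambda>_. lborel))"
  proof -
    have "PiM {0..<0+n} (\<lambda>_. lborel) = Rn n" by (simp add: Rn_def sp)
    then show ?thesis by (auto simp: mg_space intro!: nn_integral_cong)
  qed
  also have "\<dots> = mixnorm_aux 0 (replicate (length ps) 1) g (\<lambda>_. undefined)"
    using mixnorm_ones_integral[OF m] ps by simp
  also have "\<dots> \<le> ennreal (\<Prod>j<length ps. (b (0+j) - a (0+j)) powr (1 - inv_exp (ps!j))) * mixnorm_aux 0 ps g (\<lambda>_. undefined)"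
    by (rule mixnorm_holder) (use ps ab supp in \<open>auto simp: sp\<close>)
  finally show ?thesis using ps by (simp add: mixnorm_enn_def)
qed

lemma space_Rn: "space (Rn n) = PiE {..<n} (\<lambda>_. UNIV)"
  by (simp add: Rn_def space_PiM)

interpretation Rnsf: sigma_finite_measure "Rn n"
  unfolding Rn_def by (rule lb.sigma_finite) auto

definition cube :: "nat \<Rightarrow> (nat \<Rightarrow> real) \<Rightarrow> real \<Rightarrow> (nat \<Rightarrow> real) set" where
  "cube n y d = PiE {..<n} (\<lambda>i. {y i - d..y i + d})"

lemma cube_sets[measurable]: "cube n y d \<in> sets (Rn n)"
  unfolding cube_def Rn_def by (rule sets_PiM_I_finite) auto

lemma cube_space: "cube n y d \<subseteq> space (Rn n)"
  using sets.sets_into_space[OF cube_sets] .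

lemma emeasure_cube: "d \<ge> 0 \<Longrightarrow> emeasure (Rn n) (cube n y d) = ennreal ((2*d)^n)"
  unfolding cube_def Rn_def
  by (subst lb.emeasure_PiM) (auto simp: prod_ennreal ennreal_power power_mult_distrib)

lemma dist_meas[measurable]: "(\<lambda>x. sqrt (\<Sum>i<n. (x i - y i)^2)) \<in> borel_measurable (Rn n)"
  unfolding Rn_def by measurable

lemma Rball_sets[measurable]: "Rball n y r \<in> sets (Rn n)"
proof -
  have "Rball n y r = {x \<in> space (Rn n). sqrt (\<Sum>i<n. (x i - y i)^2) < r}" by (simp add: Rball_def)
  also have "\<dots> \<in> sets (Rn n)" by measurable
  finally show ?thesis .
qed

lemma Rball_space: "Rball n y r \<subseteq> space (Rn n)"
  by (auto simp: Rball_def)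

lemma coord_le_dist: fixes x y :: "nat \<Rightarrow> real" and n :: nat shows "i < n \<Longrightarrow> \<bar>x i - y i\<bar> \<le> sqrt (\<Sum>j<n. (x j - y j)^2)"
proof -
  assume i: "i < n"
  have "(x i - y i)^2 \<le> (\<Sum>j<n. (x j - y j)^2)"
    using i by (intro member_le_sum) (auto simp: finite_lessThan)
  then show ?thesis by (metis real_sqrt_abs real_sqrt_le_mono)
qed

lemma Rball_sub_cube: "Rball n y r \<subseteq> cube n y r"
proof
  fix x assume x: "x \<in> Rball n y r"
  then have "\<bar>x i - y i\<bar> < r" if "i < n" for i
    using coord_le_dist[OF that, of x y] by (auto simp: Rball_def)
  then have "y i - r \<le> x i \<and> x i \<le> y i + r" if "i < n" for i
    using that by (smt (verit))
  then show "x \<in> cube n y r" using x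
    by (auto simp: cube_def Rball_def space_Rn PiE_iff)
qed

lemma dist_le_coord:
  fixes x y :: "nat \<Rightarrow> real" and n :: nat
  assumes "\<And>i. i < n \<Longrightarrow> \<bar>x i - y i\<bar> \<le> d" "d \<ge> 0"
  shows "(\<Sum>i<n. (x i - y i)^2) \<le> real n * d^2"
proof -
  have "(\<Sum>i<n. (x i - y i)^2) \<le> (\<Sum>i<n. d^2)"
    using assms by (intro sum_mono) (metis abs_ge_zero power2_abs power_mono lessThan_iff)
  then show ?thesis by simp
qed

lemma cube_sub_Rball:
  assumes n: "n \<ge> 1" and r: "r > 0"
  shows "cube n y (r / (2 * real n)) \<subseteq> Rball n y r"
proof
  fix x assume x: "x \<in> cube n y (r / (2 * real n))"
  let ?d = "r / (2 * real n)"
  have d: "?d \<ge> 0" using r by simp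
  have "y i - ?d \<le> x i \<and> x i \<le> y i + ?d" if "i < n" for i using x that by (auto simp: cube_def PiE_iff)
  then have "\<bar>x i - y i\<bar> \<le> ?d" if "i < n" for i using that by (smt (verit))
  then have "(\<Sum>i<n. (x i - y i)^2) \<le> real n * ?d^2" using d by (intro dist_le_coord) auto
  also have "\<dots> = r^2 / (4 * n)" using n by (simp add: power2_eq_square field_simps)
  also have "\<dots> < r^2" using n r by (simp add: field_simps)
  finally have "sqrt (\<Sum>i<n. (x i - y i)^2) < sqrt (r^2)" by (rule real_sqrt_less_mono)
  then have "sqrt (\<Sum>i<n. (x i - y i)^2) < r" using r by simp
  then show "x \<in> Rball n y r" using x cube_space[of n y ?d] by (auto simp: Rball_def)
qed

lemma measure_Rball_bounds:
  assumes n: "n \<ge> 1" and r: "r > 0"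
  shows "(r / n)^n \<le> measure (Rn n) (Rball n y r)" "measure (Rn n) (Rball n y r) \<le> (2*r)^n"
    "emeasure (Rn n) (Rball n y r) < top"
proof -
  have up: "emeasure (Rn n) (Rball n y r) \<le> ennreal ((2*r)^n)"
    using emeasure_mono[OF Rball_sub_cube cube_sets, of n y r] emeasure_cube[of r n y] r by simp
  then show fin: "emeasure (Rn n) (Rball n y r) < top" by (simp add: top.not_eq_extremum order_le_less_trans)
  have "ennreal ((r/n)^n) = emeasure (Rn n) (cube n y (r / (2 * real n)))"
    using r n by (subst emeasure_cube) (auto simp: field_simps)
  also have "\<dots> \<le> emeasure (Rn n) (Rball n y r)" by (rule emeasure_mono[OF cube_sub_Rball[OF n r] Rball_sets])
  finally have lo: "ennreal ((r/n)^n) \<le> emeasure (Rn n) (Rball n y r)" .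
  show "(r / n)^n \<le> measure (Rn n) (Rball n y r)"
    using lo fin unfolding measure_def by (metis enn2real_mono enn2real_ennreal r n zero_le_divide_iff zero_le_power of_nat_0_le_iff less_imp_le)
  show "measure (Rn n) (Rball n y r) \<le> (2*r)^n"
  proof -
    have "enn2real (emeasure (Rn n) (Rball n y r)) \<le> enn2real (ennreal ((2*r)^n))"
      using up by (rule enn2real_mono) simp
    then show ?thesis using r by (simp add: measure_def)
  qed
qed

lemma sum_inv_exp: "(\<Sum>p\<leftarrow>ps. inv_exp p) = (\<Sum>j<length ps. inv_exp (ps!j))"
  by (simp add: sum_list_sum_nth atLeast0LessThan)

lemma inv_exp_bounds: "1 \<le> p \<Longrightarrow> 0 \<le> inv_exp p \<and> inv_exp p \<le> 1"
  by (cases rule: ereal_ge1_cases) (auto simp: inv_exp_def)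

lemma sum_inv_exp_nonneg: "\<forall>p\<in>set ps. 1 \<le> p \<Longrightarrow> 0 \<le> (\<Sum>p\<leftarrow>ps. inv_exp p)"
  by (induction ps) (auto dest: inv_exp_bounds)

lemma prod_powr_const:
  fixes L :: real and f :: "ereal \<Rightarrow> real"
  assumes "L > 0" and "length ps = n"
  shows "(\<Prod>j<n. L powr f (ps!j)) = L powr (\<Sum>p\<leftarrow>ps. f p)"
proof -
  have "(\<Sum>p\<leftarrow>ps. f p) = (\<Sum>i<n. f (ps!i))"
    using assms(2) by (simp add: sum_list_sum_nth atLeast0LessThan)
  moreover have "L powr (\<Sum>i<n. f (ps!i)) = (\<Prod>i<n. L powr f (ps!i))"
    by (rule powr_sum) (use assms(1) in simp)
  ultimately show ?thesis by simp
qed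

lemma mixnorm_enn_box_ub:
  assumes "\<forall>p\<in>set ps. 1 \<le> p" "length ps = n" "L > 0" "\<And>i. b i - a i = L"
    and "\<And>x. g x \<le> c * indicator (boxset {..<n} a b) x" "c < top"
  shows "mixnorm_enn ps g \<le> c * ennreal (L powr (\<Sum>p\<leftarrow>ps. inv_exp p))"
proof -
  have ab: "a i < b i" for i using assms(3) assms(4)[of i] by linarith
  have "mixnorm_aux 0 ps g (\<lambda>_. undefined) \<le> c * ennreal (\<Prod>j<length ps. (b (0+j) - a (0+j)) powr inv_exp (ps!j))"
    by (rule mixnorm_box_ub) (use assms in \<open>auto simp: atLeast0LessThan intro: ab\<close>)
  also have "(\<Prod>j<length ps. (b (0+j) - a (0+j)) powr inv_exp (ps!j)) = L powr (\<Sum>p\<leftarrow>ps. inv_exp p)"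
    using assms by (simp add: prod_powr_const)
  finally show ?thesis by (simp add: mixnorm_enn_def)
qed

lemma holder_Rn_const:
  assumes ps: "\<forall>p\<in>set ps. 1 \<le> p" "length ps = n" and L: "L > 0" "\<And>i. b i - a i = L"
    and gm: "g \<in> borel_measurable (Rn n)"
    and supp: "\<And>x. x \<notin> boxset {..<n} a b \<Longrightarrow> g x = 0"
  shows "(\<integral>\<^sup>+x. g x \<partial>Rn n) \<le> ennreal (L powr (real n - (\<Sum>p\<leftarrow>ps. inv_exp p))) * mixnorm_enn ps g"
proof -
  have "(\<integral>\<^sup>+x. g x \<partial>Rn n) \<le> ennreal (\<Prod>j<n. (b j - a j) powr (1 - inv_exp (ps!j))) * mixnorm_enn ps g"
    by (rule holder_Rn[OF ps _ gm supp]) (use L in \<open>smt (verit)\<close>)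
  also have "(\<Prod>j<n. (b j - a j) powr (1 - inv_exp (ps!j))) = L powr (\<Sum>p\<leftarrow>ps. 1 - inv_exp p)"
    using L ps by (simp add: prod_powr_const[symmetric])
  also have "(\<Sum>p\<leftarrow>ps. 1 - inv_exp p) = real n - (\<Sum>p\<leftarrow>ps. inv_exp p)"
    using ps by (simp add: sum_list_subtractf sum_list_triv)
  finally show ?thesis .
qed

lemma powr_n_e:
  fixes x e :: real
  assumes "x > 0"
  shows "(x ^ n) powr e = x powr (real n * e)"
  using assms by (simp add: powr_realpow[symmetric] powr_powr)

lemma phi_bound:
  fixes a P S :: real and n :: nat
  assumes n: "n \<ge> 1" and S: "S \<ge> 0" "S \<le> n * a" and P: "P \<ge> n * a"
  defines "e \<equiv> a - P / n - S / n"
  shows "\<exists>K. \<forall>r>0. max (((r / n)^n) powr e) (((2*r)^n) powr e) * min 1 ((2*r) powr P) * (1 + 2*r) powr S \<le> K"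
proof -
  define E where "E = n * a - P - S"
  have nE: "real n * e = E" using n by (simp add: e_def E_def field_simps)
  define C where "C = n powr (-E) + 2 powr E"
  have P0: "P \<ge> 0" using S P by linarith
  have beta: "max (((r / n)^n) powr e) (((2*r)^n) powr e) \<le> C * r powr E" if r: "r > 0" for r
  proof -
    have "((r / n)^n) powr e = (r / n) powr E" using r n nE by (simp add: powr_n_e)
    also have "\<dots> = r powr E / n powr E" using r n by (simp add: powr_divide)
    also have "\<dots> = r powr E * n powr (-E)" using r n by (simp add: powr_minus divide_inverse)
    finally have 1: "((r / n)^n) powr e = r powr E * n powr (-E)" .
    have "((2*r)^n) powr e = (2*r) powr E" using r nE powr_n_e[of "2*r" n e] by (simp only:)
    also have "\<dots> = r powr E * 2 powr E" using r by (simp add: powr_mult)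
    finally have 2: "((2*r)^n) powr e = r powr E * 2 powr E" .
    have "max (r powr E * n powr (-E)) (r powr E * 2 powr E) \<le> r powr E * n powr (-E) + r powr E * 2 powr E"
      by simp
    then show ?thesis unfolding 1 2 C_def by (simp add: algebra_simps)
  qed
  define K where "K = C * 2 powr P * 2 powr S + C * 4 powr S * (1/2) powr (E + S)"
  have C0: "C \<ge> 0" by (simp add: C_def)
  have K1: "C * 2 powr P * 2 powr S \<ge> 0" "C * 4 powr S * (1/2) powr (E + S) \<ge> 0" using C0 by auto
  show ?thesis
  proof (intro exI allI impI)
    fix r :: real assume r: "r > 0"
    let ?b = "max (((r / n)^n) powr e) (((2*r)^n) powr e)"
    have b0: "?b \<ge> 0" by (simp add: le_max_iff_disj)
    show "?b * min 1 ((2*r) powr P) * (1 + 2*r) powr S \<le> K"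
    proof (cases "r \<le> 1/2")
      case True
      have "min 1 ((2*r) powr P) \<le> 2 powr P * r powr P" using r by (simp add: powr_mult)
      moreover have "(1 + 2*r) powr S \<le> 2 powr S" using True r S by (intro powr_mono2) auto
      ultimately have "?b * min 1 ((2*r) powr P) * (1 + 2*r) powr S \<le> (C * r powr E) * (2 powr P * r powr P) * 2 powr S"
        using beta[OF r] b0 by (intro mult_mono) auto
      also have "\<dots> = C * 2 powr P * 2 powr S * r powr (E + P)" by (simp add: powr_add)
      also have "\<dots> \<le> C * 2 powr P * 2 powr S * 1"
        using True r S unfolding E_def using C0 by (intro mult_left_mono powr_le1) auto
      also have "\<dots> \<le> K" using K1 by (simp add: K_def)
      finally show ?thesis .
    next
      case False
      have "min 1 ((2*r) powr P) \<le> 1" by simp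
      moreover have "(1 + 2*r) powr S \<le> (4 * r) powr S" using False r S by (intro powr_mono2) auto
      ultimately have "?b * min 1 ((2*r) powr P) * (1 + 2*r) powr S \<le> (C * r powr E) * 1 * (4 * r) powr S"
        using beta[OF r] b0 by (intro mult_mono) auto
      also have "\<dots> = C * 4 powr S * r powr (E + S)" using r by (simp add: powr_add powr_mult)
      also have "\<dots> \<le> C * 4 powr S * (1/2) powr (E + S)"
        using False r P unfolding E_def using C0 by (intro mult_left_mono powr_mono2') auto
      also have "\<dots> \<le> K" using K1 by (simp add: K_def)
      finally show ?thesis .
    qed
  qed
qed

lemma powr_between_max:
  fixes x l u e :: real
  assumes "0 < l" "l \<le> x" "x \<le> u"
  shows "x powr e \<le> max (l powr e) (u powr e)"
proof (cases "e \<ge> 0")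
  case True
  then have "x powr e \<le> u powr e" using assms by (intro powr_mono2) auto
  then show ?thesis by simp
next
  case False
  then have "x powr e \<le> l powr e" using assms by (intro powr_mono2') auto
  then show ?thesis by simp
qed

lemma Q_in_L1loc:
  assumes "Q \<in> sets (Rn n)" "n \<ge> 1"
  shows "(indicator Q :: _ \<Rightarrow> real) \<in> L1loc n"
  unfolding L1loc_def
proof (safe)
  show "(indicator Q :: _ \<Rightarrow> real) \<in> borel_measurable (Rn n)" using assms by simp
  fix y r assume y: "y \<in> space (Rn n)" and r: "(0::real) < r"
  have fin: "emeasure (Rn n) (Rball n y r) < top"
    using measure_Rball_bounds(3)[of n r y] r assms(2) by simp
  have "integrable (Rn n) (indicator (Rball n y r \<inter> Q) :: _ \<Rightarrow> real)"
  proof (subst integrable_indicator_iff, intro conjI)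
    show "Rball n y r \<inter> Q \<inter> space (Rn n) \<in> sets (Rn n)" using assms by auto
    have "emeasure (Rn n) (Rball n y r \<inter> Q \<inter> space (Rn n)) \<le> emeasure (Rn n) (Rball n y r)"
      by (intro emeasure_mono) auto
    then show "emeasure (Rn n) (Rball n y r \<inter> Q \<inter> space (Rn n)) < \<infinity>" using fin by (simp add: order_le_less_trans)
  qed
  then show "set_integrable (Rn n) (Rball n y r) (indicator Q :: _ \<Rightarrow> real)"
  proof -
    have "(\<lambda>x. indicator (Rball n y r) x * (indicator Q x :: real)) = indicator (Rball n y r \<inter> Q)"
      by (auto simp: indicator_def fun_eq_iff)
    then show ?thesis unfolding set_integrable_def real_scaleR_def using \<open>integrable _ _\<close> by simp
  qed
qed

lemma sufficiency:
  fixes ps ss :: "ereal list" and \<alpha> :: ereal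
  assumes len: "length ps = n" "length ss = n" and n: "n \<ge> 1"
    and ps: "\<forall>p\<in>set ps. 1 \<le> p" and ss: "\<forall>s\<in>set ss. 1 \<le> s"
    and c1: "(\<Sum>s\<leftarrow>ss. inv_exp s) / real n \<le> inv_exp \<alpha>" and c2: "inv_exp \<alpha> \<le> (\<Sum>p\<leftarrow>ps. inv_exp p) / real n"
  shows "\<exists>f \<in> amalgam_space ps ss \<alpha>. \<not> (AE x in Rn n. f x = 0)"
proof -
  define P where "P = (\<Sum>p\<leftarrow>ps. inv_exp p)"
  define S where "S = (\<Sum>s\<leftarrow>ss. inv_exp s)"
  define a where "a = inv_exp \<alpha>"
  define e where "e = a - P / n - S / n"
  define Q where "Q = cube n (\<lambda>_. 1/2) (1/2)"
  have Qs: "Q \<in> sets (Rn n)" by (simp add: Q_def)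
  have Qx: "0 \<le> x i \<and> x i \<le> 1" if "x \<in> Q" "i < n" for x i using that by (auto simp: Q_def cube_def PiE_iff)
  have S0: "S \<ge> 0" using ss by (simp add: S_def sum_inv_exp_nonneg)
  have nS: "S \<le> n * a" using c1 n by (simp add: S_def a_def field_simps)
  have nP: "n * a \<le> P" using c2 n by (simp add: P_def a_def field_simps)
  obtain K where K: "\<And>r. r > 0 \<Longrightarrow> max (((r / n)^n) powr e) (((2*r)^n) powr e) * min 1 ((2*r) powr P) * (1 + 2*r) powr S \<le> K"
    using phi_bound[OF n S0 nS nP] unfolding e_def by blast
  have val: "mixnorm_enn ss (\<lambda>y. ennreal (measure (Rn n) (Rball n y r) powr e) *
               mixnorm ps (\<lambda>x. indicator (Rball n y r) x * indicator Q x)) \<le> ennreal K" if r: "r > 0" for r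
  proof -
    define m where "m = min 1 ((2*r) powr P)"
    define bt where "bt = max (((r/n)^n) powr e) (((2*r)^n) powr e)"
    define Yb where "Yb = boxset {..<n} (\<lambda>_. -r) (\<lambda>_. 1 + r)"
    let ?g = "\<lambda>y x. ennreal \<bar>indicator (Rball n y r) x * indicator Q x\<bar>"
    have inner: "mixnorm ps (\<lambda>x. indicator (Rball n y r) x * indicator Q x) \<le> ennreal m * indicator Yb y" for y
    proof (cases "y \<in> Yb")
      case True
      have A: "mixnorm_enn ps (?g y) \<le> 1 * ennreal (1 powr P)"
        unfolding P_def
      proof (rule mixnorm_enn_box_ub[OF ps len(1), of 1 "\<lambda>_. 1" "\<lambda>_. 0"])
        fix x show "?g y x \<le> 1 * indicator (boxset {..<n} (\<lambda>_. 0) (\<lambda>_. 1)) x"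
          using Qx[of x] by (auto simp: indicator_def boxset_def)
      qed auto
      have B: "mixnorm_enn ps (?g y) \<le> 1 * ennreal ((2*r) powr P)"
        unfolding P_def
      proof (rule mixnorm_enn_box_ub[OF ps len(1), of "2*r" "\<lambda>i. y i + r" "\<lambda>i. y i - r"])
        fix x show "?g y x \<le> 1 * indicator (boxset {..<n} (\<lambda>i. y i - r) (\<lambda>i. y i + r)) x"
          using Rball_sub_cube[of n y r]
          by (auto simp: indicator_def boxset_def cube_def PiE_iff subset_eq)
      qed (use r in auto)
      have "mixnorm_enn ps (?g y) \<le> ennreal m"
        using A B by (simp add: m_def min_def)
      then show ?thesis using True by (simp add: mixnorm_def)
    next
      case False
      have "?g y x = 0" for x
      proof (rule ccontr)
        assume "?g y x \<noteq> 0"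
        then have xB: "x \<in> Rball n y r" and xQ: "x \<in> Q" by (auto simp: indicator_def split: if_splits)
        have "-r \<le> y i \<and> y i \<le> 1 + r" if i: "i < n" for i
        proof -
          have "\<bar>x i - y i\<bar> < r" using coord_le_dist[OF i, of x y] xB by (auto simp: Rball_def)
          then show ?thesis using Qx[OF xQ i] by linarith
        qed
        then show False using False by (auto simp: Yb_def boxset_def)
      qed
      then have "?g y = (\<lambda>_. 0)" by (rule ext)
      then have "mixnorm ps (\<lambda>x. indicator (Rball n y r) x * indicator Q x) = 0"
        using mixnorm_zero[OF ps, of 0 "\<lambda>_. undefined"] by (simp only: mixnorm_def mixnorm_enn_def)
      then show ?thesis by simp
    qed
    have meas: "ennreal (measure (Rn n) (Rball n y r) powr e) \<le> ennreal bt" for y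
    proof -
      have "measure (Rn n) (Rball n y r) powr e \<le> bt"
        unfolding bt_def using measure_Rball_bounds[OF n r, of y] r n
        by (intro powr_between_max) auto
      then show ?thesis by (rule ennreal_leI)
    qed
    have m0: "m \<ge> 0" by (simp add: m_def)
    have bt0: "bt \<ge> 0" by (simp add: bt_def le_max_iff_disj)
    have "mixnorm_enn ss (\<lambda>y. ennreal (measure (Rn n) (Rball n y r) powr e) *
               mixnorm ps (\<lambda>x. indicator (Rball n y r) x * indicator Q x))
          \<le> ennreal (bt * m) * ennreal ((1 + 2*r) powr S)"
      unfolding S_def
    proof (rule mixnorm_enn_box_ub[OF ss len(2), of "1 + 2*r" "\<lambda>_. 1 + r" "\<lambda>_. -r"])
      fix y
      have "ennreal (measure (Rn n) (Rball n y r) powr e) * mixnorm ps (\<lambda>x. indicator (Rball n y r) x * indicator Q x)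
          \<le> ennreal bt * (ennreal m * indicator Yb y)"
        using meas inner by (intro mult_mono) auto
      then show "ennreal (measure (Rn n) (Rball n y r) powr e) * mixnorm ps (\<lambda>x. indicator (Rball n y r) x * indicator Q x)
          \<le> ennreal (bt * m) * indicator (boxset {..<n} (\<lambda>_. - r) (\<lambda>_. 1 + r)) y"
        using m0 bt0 by (simp add: Yb_def ennreal_mult mult.assoc)
    qed (use r in auto)
    also have "\<dots> = ennreal (bt * m * (1 + 2*r) powr S)" using m0 bt0 by (simp add: ennreal_mult)
    also have "\<dots> \<le> ennreal K" using K[OF r] by (intro ennreal_leI) (simp add: bt_def m_def)
    finally show ?thesis .
  qed
  have "amalgam_norm ps ss \<alpha> (indicator Q) \<le> ennreal K"
    unfolding amalgam_norm_def Let_def len(1) P_def[symmetric] S_def[symmetric] a_def[symmetric] e_def[symmetric]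
    using val by (intro SUP_least) auto
  then have fin: "amalgam_norm ps ss \<alpha> (indicator Q) < \<infinity>" by (simp add: order_le_less_trans)
  have L1: "(indicator Q :: _ \<Rightarrow> real) \<in> L1loc (length ps)" using Q_in_L1loc[OF Qs n] len by simp
  have "emeasure (Rn n) Q = 1" by (simp add: Q_def emeasure_cube)
  then have nAE: "\<not> (AE x in Rn n. (indicator Q x :: real) = 0)"
    by (subst AE_iff_measurable[OF Qs]) (use sets.sets_into_space[OF Qs] in \<open>auto simp: indicator_def\<close>)
  show ?thesis using fin L1 nAE unfolding amalgam_space_def by blast
qed

lemma powr_between_min:
  fixes x l u e :: real
  assumes "0 < l" "l \<le> x" "x \<le> u"
  shows "min (l powr e) (u powr e) \<le> x powr e"
proof (cases "e \<ge> 0")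
  case True
  then have "l powr e \<le> x powr e" using assms by (intro powr_mono2) auto
  then show ?thesis by simp
next
  case False
  then have "u powr e \<le> x powr e" using assms by (intro powr_mono2') auto
  then show ?thesis by simp
qed

lemma beta_lower:
  fixes r e :: real and n :: nat
  assumes n: "n \<ge> 1" and r: "r > 0"
  shows "min (n powr (-(n*e))) (2 powr (n*e)) * r powr (n*e) \<le> min (((r/n)^n) powr e) (((2*r)^n) powr e)"
proof -
  have "((r / n)^n) powr e = (r / n) powr (n*e)" using r n by (simp add: powr_n_e)
  also have "\<dots> = r powr (n*e) / n powr (n*e)" using r n by (simp add: powr_divide)
  also have "\<dots> = r powr (n*e) * n powr (-(n*e))" by (simp add: powr_minus divide_inverse)
  finally have 1: "((r / n)^n) powr e = r powr (n*e) * n powr (-(n*e))" .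
  have 2: "((2*r)^n) powr e = r powr (n*e) * 2 powr (n*e)"
    using r powr_n_e[of "2*r" n e] by (simp add: powr_mult)
  have rp: "r powr (n*e) > 0" using r by simp
  show ?thesis unfolding 1 2 using rp
    by (simp add: min_def mult.commute mult_right_mono)
qed

lemma large_r_exists:
  fixes c \<delta> B r0 :: real
  assumes "c > 0" "\<delta> > 0"
  shows "\<exists>r. r > r0 \<and> r > 0 \<and> c * r powr \<delta> > B"
proof -
  define X where "X = (\<bar>B\<bar> / c + 1) powr (1/\<delta>)"
  define r where "r = max (\<bar>r0\<bar> + 1) X"
  have X: "X > 0" using assms by (simp add: X_def) (smt (verit) divide_nonneg_pos abs_ge_zero)
  have r: "r > r0" "r > 0" "r \<ge> X" by (auto simp: r_def)
  have Bp: "\<bar>B\<bar> / c + 1 > 0" using assms by (smt (verit) divide_nonneg_pos abs_ge_zero)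
  have "X powr \<delta> = \<bar>B\<bar> / c + 1" using assms Bp by (simp add: X_def powr_powr)
  moreover have "X powr \<delta> \<le> r powr \<delta>" using X r assms by (intro powr_mono2) auto
  ultimately have "\<bar>B\<bar> / c + 1 \<le> r powr \<delta>" by simp
  then have "c * (\<bar>B\<bar> / c + 1) \<le> c * r powr \<delta>" using assms by (intro mult_left_mono) auto
  moreover have "c * (\<bar>B\<bar> / c + 1) = \<bar>B\<bar> + c" using assms by (simp add: distrib_left)
  ultimately have "\<bar>B\<bar> + c \<le> c * r powr \<delta>" by simp
  then show ?thesis using r assms by (intro exI[of _ r]) auto
qed

lemma small_r_exists:
  fixes c \<delta> B r1 :: real
  assumes "c > 0" "\<delta> < 0" "r1 > 0"
  shows "\<exists>r. r \<le> r1 \<and> r > 0 \<and> c * r powr \<delta> > B"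
proof -
  define X where "X = (\<bar>B\<bar> / c + 1) powr (1/\<delta>)"
  define r where "r = min r1 X"
  have X: "X > 0" using assms by (simp add: X_def) (smt (verit) divide_nonneg_pos abs_ge_zero)
  have r: "r \<le> r1" "r > 0" "r \<le> X" using X assms by (auto simp: r_def)
  have Bp: "\<bar>B\<bar> / c + 1 > 0" using assms by (smt (verit) divide_nonneg_pos abs_ge_zero)
  have "X powr \<delta> = \<bar>B\<bar> / c + 1" using assms Bp by (simp add: X_def powr_powr)
  moreover have "X powr \<delta> \<le> r powr \<delta>" using X r assms by (intro powr_mono2') auto
  ultimately have "\<bar>B\<bar> / c + 1 \<le> r powr \<delta>" by simp
  then have "c * (\<bar>B\<bar> / c + 1) \<le> c * r powr \<delta>" using assms by (intro mult_left_mono) auto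
  moreover have "c * (\<bar>B\<bar> / c + 1) = \<bar>B\<bar> + c" using assms by (simp add: distrib_left)
  ultimately have "\<bar>B\<bar> + c \<le> c * r powr \<delta>" by simp
  then show ?thesis using r assms by (intro exI[of _ r]) auto
qed

lemma pos_cube:
  fixes f :: "(nat \<Rightarrow> real) \<Rightarrow> real"
  assumes fm[measurable]: "f \<in> borel_measurable (Rn n)" and nAE: "\<not> (AE x in Rn n. f x = 0)"
  shows "\<exists>R>0. (\<integral>\<^sup>+x. ennreal \<bar>f x\<bar> * indicator (cube n (\<lambda>_. 0) R) x \<partial>Rn n) > 0"
proof (rule ccontr)
  assume "\<not> ?thesis"
  then have z: "(\<integral>\<^sup>+x. ennreal \<bar>f x\<bar> * indicator (cube n (\<lambda>_. 0) (real (Suc k))) x \<partial>Rn n) = 0" for k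
    by (metis not_gr_zero of_nat_0_less_iff zero_less_Suc)
  have "AE x in Rn n. ennreal \<bar>f x\<bar> * indicator (cube n (\<lambda>_. 0) (real (Suc k))) x = 0" for k
    using z[of k] by (subst (asm) nn_integral_0_iff_AE) auto
  then have "AE x in Rn n. \<forall>k. ennreal \<bar>f x\<bar> * indicator (cube n (\<lambda>_. 0) (real (Suc k))) x = 0"
    by (intro AE_all_countable[THEN iffD2] allI)
  then have "AE x in Rn n. f x = 0"
  proof (rule AE_mp[OF _ AE_I2], intro impI)
    fix x assume x: "x \<in> space (Rn n)" and all: "\<forall>k. ennreal \<bar>f x\<bar> * indicator (cube n (\<lambda>_. 0) (real (Suc k))) x = 0"
    obtain k :: nat where k: "Max ((\<lambda>i. \<bar>x i\<bar>) ` {..<n}) \<le> real k" using real_arch_simple by blast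
    have "x \<in> cube n (\<lambda>_. 0) (real (Suc k))"
    proof -
      have "0 - real (Suc k) \<le> x i \<and> x i \<le> 0 + real (Suc k)" if "i < n" for i
      proof -
        have "\<bar>x i\<bar> \<le> Max ((\<lambda>i. \<bar>x i\<bar>) ` {..<n})" using that by (intro Max_ge) auto
        then show ?thesis using k by linarith
      qed
      then show ?thesis using x unfolding cube_def space_Rn PiE_iff by auto
    qed
    then show "f x = 0" using all[rule_format, of k] by simp
  qed
  then show False using nAE by simp
qed

lemma meas_factor_lower:
  assumes n: "n \<ge> 1" and r: "r > 0"
  shows "ennreal (min (n powr (-(n*e))) (2 powr (n*e)) * r powr (n*e)) \<le> ennreal (measure (Rn n) (Rball n y r) powr e)"
proof (rule ennreal_leI)
  have "min (((r/n)^n) powr e) (((2*r)^n) powr e) \<le> measure (Rn n) (Rball n y r) powr e"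
    using measure_Rball_bounds[OF n r, of y] r n by (intro powr_between_min) auto
  then show "min (n powr (-(n*e))) (2 powr (n*e)) * r powr (n*e) \<le> measure (Rn n) (Rball n y r) powr e"
    using beta_lower[OF n r, of e] by linarith
qed

lemma cube0_sub_Rball:
  fixes R r :: real
  assumes n: "n \<ge> 1" and R: "R > 0" and r: "r > 2 * n * R" and y: "y \<in> cube n (\<lambda>_. 0) (r / (2 * n))"
  shows "cube n (\<lambda>_. 0) R \<subseteq> Rball n y r"
proof
  fix x assume x: "x \<in> cube n (\<lambda>_. 0) R"
  let ?d = "R + r / (2 * n)"
  have "2 * real n * R > 0" using n R by simp
  then have rp: "r > 0" using r by linarith
  have d: "?d \<ge> 0" using R rp by simp
  have "\<bar>x i - y i\<bar> \<le> ?d" if "i < n" for i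
  proof -
    have "-R \<le> x i \<and> x i \<le> R" "- (r / (2*n)) \<le> y i \<and> y i \<le> r / (2*n)"
      using x y that by (auto simp: cube_def PiE_iff)
    then show ?thesis by linarith
  qed
  then have "(\<Sum>i<n. (x i - y i)^2) \<le> real n * ?d^2" using d by (intro dist_le_coord) auto
  also have "\<dots> < real n * (r / n)^2"
  proof -
    have "R < r / (2 * n)" using r n by (simp add: field_simps)
    then have "?d < r / n" using n by (simp add: field_simps)
    then have "?d^2 < (r / n)^2" using d by (intro power_strict_mono) auto
    then show ?thesis using n by simp
  qed
  also have "\<dots> = r^2 / n" using n by (simp add: power2_eq_square field_simps)
  also have "\<dots> \<le> r^2 / 1" using n by (intro divide_left_mono) auto
  finally have "sqrt (\<Sum>i<n. (x i - y i)^2) < sqrt (r^2)" by (intro real_sqrt_less_mono) simp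
  then show "x \<in> Rball n y r" using x rp cube_space[of n "\<lambda>_. 0" R] by (auto simp: Rball_def)
qed


lemma nec_P:
  fixes f :: "(nat \<Rightarrow> real) \<Rightarrow> real" and ps ss :: "ereal list"
  assumes ps: "\<forall>p\<in>set ps. 1 \<le> p" and len: "length ps = n"
    and ss: "\<forall>s\<in>set ss. 1 \<le> s" and len2: "length ss = n" and n: "n \<ge> 1"
    and fm[measurable]: "f \<in> borel_measurable (Rn n)" and nAE: "\<not> (AE x in Rn n. f x = 0)"
    and bound: "\<And>r. r > 0 \<Longrightarrow> mixnorm_enn ss (\<lambda>y. ennreal (measure (Rn n) (Rball n y r) powr e) *
                 mixnorm ps (\<lambda>x. indicator (Rball n y r) x * f x)) \<le> N"
    and N: "N < top"
    and e: "e = a - (\<Sum>p\<leftarrow>ps. inv_exp p) / n - (\<Sum>s\<leftarrow>ss. inv_exp s) / n"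
  shows "n * a \<le> (\<Sum>p\<leftarrow>ps. inv_exp p)"
proof (rule ccontr)
  define P where "P = (\<Sum>p\<leftarrow>ps. inv_exp p)"
  define S where "S = (\<Sum>s\<leftarrow>ss. inv_exp s)"
  assume "\<not> n * a \<le> (\<Sum>p\<leftarrow>ps. inv_exp p)"
  then have gt: "n * a - P > 0" by (simp add: P_def)
  define E where "E = n * e"
  have ES: "E + S = n * a - P" using n by (simp add: E_def e P_def S_def field_simps)
  obtain R where R: "R > 0" and m0: "(\<integral>\<^sup>+x. ennreal \<bar>f x\<bar> * indicator (cube n (\<lambda>_. 0) R) x \<partial>Rn n) > 0"
    using pos_cube[OF fm nAE] by blast
  define C where "C = cube n (\<lambda>_. 0) R"
  define m where "m = (\<integral>\<^sup>+x. ennreal \<bar>f x\<bar> * indicator C x \<partial>Rn n)"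
  define \<mu> where "\<mu> = enn2real (min m 1)"
  have mm: "min m 1 < top" by (simp add: min_less_iff_disj)
  have mp: "min m 1 > 0" using m0 by (simp add: m_def C_def)
  have \<mu>: "\<mu> > 0" "ennreal \<mu> \<le> m"
  proof -
    show "\<mu> > 0" using mm mp by (simp add: \<mu>_def enn2real_positive_iff)
    have "ennreal \<mu> = min m 1" using mm by (simp add: \<mu>_def)
    then show "ennreal \<mu> \<le> m" by simp
  qed
  define cR where "cR = (2*R) powr (real n - P)"
  have cR: "cR > 0" using R by (simp add: cR_def)
  have hol: "m \<le> ennreal cR * mixnorm_enn ps (\<lambda>x. ennreal \<bar>f x\<bar> * indicator C x)"
    unfolding m_def cR_def P_def
  proof (rule holder_Rn_const[OF ps len, of "2*R" "\<lambda>_. R" "\<lambda>_. -R"])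
    fix x assume "x \<notin> boxset {..<n} (\<lambda>_. - R) (\<lambda>_. R)"
    then have "x \<notin> C" by (auto simp: C_def cube_def boxset_def PiE_iff)
    then show "ennreal \<bar>f x\<bar> * indicator C x = 0" by simp
  qed (use R in \<open>auto simp: C_def\<close>)
  define cb where "cb = min (n powr (-E)) (2 powr E)"
  have cb: "cb > 0" using n by (simp add: cb_def)
  define N' where "N' = enn2real N"
  have NN: "N = ennreal N'" "N' \<ge> 0" using N by (auto simp: N'_def)
  have key: "cb * \<mu> * n powr (-S) * r powr (E + S) \<le> cR * N'" if r: "r > 2 * real n * R" for r
  proof -
    have "2 * real n * R > 0" using n R by simp
    then have rp: "r > 0" using r by linarith
    define \<rho> where "\<rho> = r / (2 * n)"
    have \<rho>: "\<rho> > 0" using rp n by (simp add: \<rho>_def)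
    define Y where "Y = cube n (\<lambda>_. 0) \<rho>"
    define F where "F = (\<lambda>y. ennreal (measure (Rn n) (Rball n y r) powr e) * mixnorm ps (\<lambda>x. indicator (Rball n y r) x * f x))"
    have pw: "ennreal (cb * r powr E * \<mu>) * indicator Y y \<le> ennreal cR * F y" for y
    proof (cases "y \<in> Y")
      case True
      have sub: "C \<subseteq> Rball n y r" unfolding C_def
        using cube0_sub_Rball[OF n R r] True by (simp add: Y_def \<rho>_def)
      have "mixnorm_enn ps (\<lambda>x. ennreal \<bar>f x\<bar> * indicator C x) \<le> mixnorm ps (\<lambda>x. indicator (Rball n y r) x * f x)"
        unfolding mixnorm_def mixnorm_enn_def
        using ps sub by (intro mixnorm_mono) (auto simp: indicator_def)
      then have "ennreal \<mu> \<le> ennreal cR * mixnorm ps (\<lambda>x. indicator (Rball n y r) x * f x)"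
        using \<mu>(2) hol by (meson dual_order.trans mult_left_mono zero_le)
      moreover have "ennreal (cb * r powr E) \<le> ennreal (measure (Rn n) (Rball n y r) powr e)"
        using meas_factor_lower[OF n rp, of e y] by (simp add: cb_def E_def)
      ultimately have "ennreal (cb * r powr E) * ennreal \<mu> \<le> ennreal (measure (Rn n) (Rball n y r) powr e) * (ennreal cR * mixnorm ps (\<lambda>x. indicator (Rball n y r) x * f x))"
        by (intro mult_mono) auto
      moreover have "ennreal (cb * r powr E * \<mu>) * indicator Y y = ennreal (cb * r powr E) * ennreal \<mu>"
        using True cb \<mu> by (simp add: ennreal_mult)
      moreover have "ennreal cR * F y = ennreal (measure (Rn n) (Rball n y r) powr e) * (ennreal cR * mixnorm ps (\<lambda>x. indicator (Rball n y r) x * f x))"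
        by (simp only: F_def mult.left_commute)
      ultimately show ?thesis by simp
    qed (simp)
    have "(\<integral>\<^sup>+y. ennreal (cb * r powr E * \<mu>) * indicator Y y \<partial>Rn n)
        \<le> ennreal ((2*\<rho>) powr (real n - S)) * mixnorm_enn ss (\<lambda>y. ennreal (cb * r powr E * \<mu>) * indicator Y y)"
      unfolding S_def
    proof (rule holder_Rn_const[OF ss len2, of "2*\<rho>" "\<lambda>_. \<rho>" "\<lambda>_. -\<rho>"])
      fix y assume "y \<notin> boxset {..<n} (\<lambda>_. - \<rho>) (\<lambda>_. \<rho>)"
      then have "y \<notin> Y" by (auto simp: Y_def cube_def boxset_def PiE_iff)
      then show "ennreal (cb * r powr E * \<mu>) * indicator Y y = 0" by simp
    qed (use \<rho> in \<open>auto simp: Y_def\<close>)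
    also have "mixnorm_enn ss (\<lambda>y. ennreal (cb * r powr E * \<mu>) * indicator Y y) \<le> mixnorm_enn ss (\<lambda>y. ennreal cR * F y)"
      unfolding mixnorm_enn_def using ss pw by (intro mixnorm_mono) auto
    also have "\<dots> = ennreal cR * mixnorm_enn ss F"
      unfolding mixnorm_enn_def using ss by (intro mixnorm_cmult) auto
    also have "\<dots> \<le> ennreal cR * N" using bound[OF rp] by (intro mult_left_mono) (auto simp: F_def)
    finally have "(\<integral>\<^sup>+y. ennreal (cb * r powr E * \<mu>) * indicator Y y \<partial>Rn n) \<le> ennreal ((2*\<rho>) powr (real n - S)) * (ennreal cR * N)"
      by (simp add: mult_left_mono)
    moreover have "(\<integral>\<^sup>+y. ennreal (cb * r powr E * \<mu>) * indicator Y y \<partial>Rn n) = ennreal (cb * r powr E * \<mu> * (2*\<rho>) powr real n)"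
    proof -
      have Ys: "Y \<in> sets (Rn n)" by (simp add: Y_def)
      have "(\<integral>\<^sup>+y. ennreal (cb * r powr E * \<mu>) * indicator Y y \<partial>Rn n) = ennreal (cb * r powr E * \<mu>) * emeasure (Rn n) Y"
        using Ys by (rule nn_integral_cmult_indicator)
      also have "emeasure (Rn n) Y = ennreal ((2*\<rho>)^n)" using \<rho> by (simp add: Y_def emeasure_cube)
      also have "(2*\<rho>)^n = (2*\<rho>) powr real n" using \<rho> by (simp add: powr_realpow)
      also have "ennreal (cb * r powr E * \<mu>) * ennreal ((2*\<rho>) powr real n) = ennreal (cb * r powr E * \<mu> * (2*\<rho>) powr real n)"
        using cb \<mu> by (simp add: ennreal_mult)
      finally show ?thesis .
    qed
    ultimately have "ennreal (cb * r powr E * \<mu> * (2*\<rho>) powr real n) \<le> ennreal ((2*\<rho>) powr (real n - S)) * (ennreal cR * ennreal N')"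
      using NN by simp
    also have "\<dots> = ennreal ((2*\<rho>) powr (real n - S) * cR * N')"
      using NN cR by (simp add: ennreal_mult mult.assoc)
    finally have "ennreal (cb * r powr E * \<mu> * (2*\<rho>) powr real n) \<le> ennreal ((2*\<rho>) powr (real n - S) * cR * N')" .
    then have ineq: "cb * r powr E * \<mu> * (2*\<rho>) powr real n \<le> (2*\<rho>) powr (real n - S) * cR * N'"
      using NN cR by (subst (asm) ennreal_le_iff) auto
    have tn: "(2*\<rho>) powr real n = (2*\<rho>) powr (real n - S) * (2*\<rho>) powr S"
      by (simp add: powr_add[symmetric])
    have "(2*\<rho>) powr (real n - S) * (cb * r powr E * \<mu> * (2*\<rho>) powr S) \<le> (2*\<rho>) powr (real n - S) * (cR * N')"
      using ineq unfolding tn by (simp add: mult_ac)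
    then have i2: "cb * r powr E * \<mu> * (2*\<rho>) powr S \<le> cR * N'"
      using \<rho> by (subst (asm) mult_le_cancel_left_pos) auto
    have "(2*\<rho>) powr S = r powr S * n powr (-S)"
    proof -
      have "2*\<rho> = r / n" by (simp add: \<rho>_def)
      then have "(2*\<rho>) powr S = r powr S / n powr S" using rp by (simp add: powr_divide)
      then show ?thesis by (simp add: powr_minus divide_inverse)
    qed
    then have "cb * r powr E * \<mu> * (2*\<rho>) powr S = cb * \<mu> * n powr (-S) * (r powr E * r powr S)"
      by (simp add: mult_ac)
    also have "r powr E * r powr S = r powr (E + S)" by (simp add: powr_add)
    finally have eq3: "cb * r powr E * \<mu> * (2*\<rho>) powr S = cb * \<mu> * n powr (-S) * r powr (E + S)" .
    show ?thesis using i2 unfolding eq3 .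
  qed
  obtain r where r: "r > 2 * real n * R" "r > 0" "cb * \<mu> * n powr (-S) * r powr (E + S) > cR * N'"
  proof -
    have pos: "cb * \<mu> * n powr (-S) > 0" using cb \<mu> n by simp
    have d: "E + S > 0" using gt ES by simp
    show ?thesis using large_r_exists[OF pos d, of "2 * real n * R" "cR * N'"] that by blast
  qed
  then show False using key[OF r(1)] by simp
qed

interpretation Rnp: pair_sigma_finite "Rn n" "Rn m"
  unfolding pair_sigma_finite_def using Rnsf.sigma_finite_measure_axioms by blast

lemma pair_dist_meas:
  "(\<lambda>(y, x). sqrt (\<Sum>i<n. (x i - y i)^2)) \<in> borel_measurable (Rn n \<Otimes>\<^sub>M Rn n)"
  unfolding Rn_def by measurable

lemma pair_meas:
  assumes fm[measurable]: "f \<in> borel_measurable (Rn n)" and K[measurable]: "K \<in> sets (Rn n)"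
  shows "(\<lambda>(y, x). ennreal \<bar>f x\<bar> * indicator (Rball n y r) x * indicator K y) \<in> borel_measurable (Rn n \<Otimes>\<^sub>M Rn n)"
proof -
  have [measurable]: "(\<lambda>(y, x). sqrt (\<Sum>i<n. (x i - y i)^2)) \<in> borel_measurable (Rn n \<Otimes>\<^sub>M Rn n)"
    by (rule pair_dist_meas)
  have "(\<lambda>(y, x). ennreal \<bar>f x\<bar> * (if sqrt (\<Sum>i<n. (x i - y i)^2) < r then 1 else 0) * indicator K y)
        \<in> borel_measurable (Rn n \<Otimes>\<^sub>M Rn n)"
    by measurable
  then show ?thesis
    by (rule measurable_cong[THEN iffD1, rotated])
       (auto simp: space_pair_measure Rball_def indicator_def)
qed

lemma Rball_sym: "x \<in> space (Rn n) \<Longrightarrow> y \<in> space (Rn n) \<Longrightarrow> x \<in> Rball n y r \<longleftrightarrow> y \<in> Rball n x r"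
proof -
  have "(\<Sum>i<n. (x i - y i)^2) = (\<Sum>i<n. (y i - x i)^2)" by (intro sum.cong) (auto simp: power2_commute)
  then show "x \<in> space (Rn n) \<Longrightarrow> y \<in> space (Rn n) \<Longrightarrow> x \<in> Rball n y r \<longleftrightarrow> y \<in> Rball n x r" by (auto simp: Rball_def)
qed

lemma Rball_in_bigger_cube:
  assumes x: "x \<in> cube n (\<lambda>_. 0) R" and r: "r \<le> 1" and y: "y \<in> Rball n x r"
  shows "y \<in> cube n (\<lambda>_. 0) (R + 1)"
proof -
  have "0 - (R + 1) \<le> y i \<and> y i \<le> 0 + (R + 1)" if i: "i < n" for i
  proof -
    have "\<bar>y i - x i\<bar> < r" using coord_le_dist[OF i, of y x] y by (auto simp: Rball_def)
    moreover have "-R \<le> x i \<and> x i \<le> R" using x i by (auto simp: cube_def PiE_iff)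
    ultimately show ?thesis using r by linarith
  qed
  moreover have "y \<in> extensional {..<n}" using y by (auto simp: Rball_def space_Rn PiE_iff)
  ultimately show ?thesis unfolding cube_def PiE_iff by auto
qed

lemma nec_S:
  fixes f :: "(nat \<Rightarrow> real) \<Rightarrow> real" and ps ss :: "ereal list"
  assumes ps: "\<forall>p\<in>set ps. 1 \<le> p" and len: "length ps = n"
    and ss: "\<forall>s\<in>set ss. 1 \<le> s" and len2: "length ss = n" and n: "n \<ge> 1"
    and fm[measurable]: "f \<in> borel_measurable (Rn n)" and nAE: "\<not> (AE x in Rn n. f x = 0)"
    and bound: "\<And>r. r > 0 \<Longrightarrow> mixnorm_enn ss (\<lambda>y. ennreal (measure (Rn n) (Rball n y r) powr e) *
                 mixnorm ps (\<lambda>x. indicator (Rball n y r) x * f x)) \<le> N"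
    and N: "N < top"
    and e: "e = a - (\<Sum>p\<leftarrow>ps. inv_exp p) / n - (\<Sum>s\<leftarrow>ss. inv_exp s) / n"
  shows "(\<Sum>s\<leftarrow>ss. inv_exp s) \<le> n * a"
proof (rule ccontr)
  define P where "P = (\<Sum>p\<leftarrow>ps. inv_exp p)"
  define S where "S = (\<Sum>s\<leftarrow>ss. inv_exp s)"
  assume "\<not> (\<Sum>s\<leftarrow>ss. inv_exp s) \<le> n * a"
  then have lt: "n * a - S < 0" by (simp add: S_def)
  define E where "E = n * e"
  have EP: "E + P = n * a - S" using n by (simp add: E_def e P_def S_def field_simps)
  obtain R where R: "R > 0" and m0: "(\<integral>\<^sup>+x. ennreal \<bar>f x\<bar> * indicator (cube n (\<lambda>_. 0) R) x \<partial>Rn n) > 0"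
    using pos_cube[OF fm nAE] by blast
  define C where "C = cube n (\<lambda>_. 0) R"
  define K where "K = cube n (\<lambda>_. 0) (R + 1)"
  have Ks[measurable]: "K \<in> sets (Rn n)" "C \<in> sets (Rn n)" by (auto simp: K_def C_def)
  define m where "m = (\<integral>\<^sup>+x. ennreal \<bar>f x\<bar> * indicator C x \<partial>Rn n)"
  define \<mu> where "\<mu> = enn2real (min m 1)"
  have mm: "min m 1 < top" by (simp add: min_less_iff_disj)
  have mp: "min m 1 > 0" using m0 by (simp add: m_def C_def)
  have \<mu>: "\<mu> > 0" "ennreal \<mu> \<le> m"
  proof -
    show "\<mu> > 0" using mm mp by (simp add: \<mu>_def enn2real_positive_iff)
    have "ennreal \<mu> = min m 1" using mm by (simp add: \<mu>_def)
    then show "ennreal \<mu> \<le> m" by simp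
  qed
  define cK where "cK = (2*(R+1)) powr (real n - S)"
  have cK: "cK > 0" using R by (simp add: cK_def)
  define cb where "cb = min (n powr (-E)) (2 powr E)"
  have cb: "cb > 0" using n by (simp add: cb_def)
  define N' where "N' = enn2real N"
  have NN: "N = ennreal N'" "N' \<ge> 0" using N by (auto simp: N'_def)
  have key: "cb * \<mu> * n powr (-real n) * r powr (E + P) \<le> cK * 2 powr (real n - P) * N'" if r: "r > 0" "r \<le> 1" for r
  proof -
    define F where "F = (\<lambda>y. ennreal (measure (Rn n) (Rball n y r) powr e) * mixnorm ps (\<lambda>x. indicator (Rball n y r) x * f x))"
    define H where "H = (\<lambda>y x. ennreal \<bar>f x\<bar> * indicator (Rball n y r) x * indicator K y)"
    have Hm: "case_prod H \<in> borel_measurable (Rn n \<Otimes>\<^sub>M Rn n)"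
      unfolding H_def using pair_meas[OF fm Ks(1), of r] by simp
    define Gk where "Gk = (\<lambda>y. \<integral>\<^sup>+x. H y x \<partial>Rn n)"
    have Gkm: "Gk \<in> borel_measurable (Rn n)" unfolding Gk_def using Hm by (rule Rnsf.borel_measurable_nn_integral)
    define cP where "cP = (2*r) powr (real n - P)"
    have cP: "cP > 0" using r by (simp add: cP_def)
    have s1: "Gk y \<le> ennreal cP * mixnorm ps (\<lambda>x. indicator (Rball n y r) x * f x)" for y
    proof -
      have "Gk y \<le> (\<integral>\<^sup>+x. ennreal \<bar>indicator (Rball n y r) x * f x\<bar> \<partial>Rn n)"
        unfolding Gk_def H_def by (intro nn_integral_mono) (auto simp: indicator_def)
      also have "\<dots> \<le> ennreal cP * mixnorm_enn ps (\<lambda>x. ennreal \<bar>indicator (Rball n y r) x * f x\<bar>)"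
        unfolding cP_def P_def
      proof (rule holder_Rn_const[OF ps len, of "2*r" "\<lambda>i. y i + r" "\<lambda>i. y i - r"])
        fix x assume "x \<notin> boxset {..<n} (\<lambda>i. y i - r) (\<lambda>i. y i + r)"
        then have "x \<notin> Rball n y r" using Rball_sub_cube[of n y r] by (auto simp: cube_def boxset_def PiE_iff)
        then show "ennreal \<bar>indicator (Rball n y r) x * f x\<bar> = 0" by simp
      qed (use r in auto)
      finally show ?thesis by (simp add: mixnorm_def)
    qed
    have s2: "ennreal (cb * r powr E) * Gk y \<le> ennreal cP * F y" for y
    proof -
      have "ennreal (cb * r powr E) * Gk y \<le> ennreal (measure (Rn n) (Rball n y r) powr e) * (ennreal cP * mixnorm ps (\<lambda>x. indicator (Rball n y r) x * f x))"
        using meas_factor_lower[OF n r(1), of e y] s1[of y] by (intro mult_mono) (auto simp: cb_def E_def)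
      then show ?thesis by (simp only: F_def mult.left_commute)
    qed
    have s3: "ennreal (cb * r powr E) * mixnorm_enn ss Gk \<le> ennreal cP * N"
    proof -
      have "ennreal (cb * r powr E) * mixnorm_enn ss Gk = mixnorm_enn ss (\<lambda>y. ennreal (cb * r powr E) * Gk y)"
        unfolding mixnorm_enn_def using ss by (intro mixnorm_cmult[symmetric]) auto
      also have "\<dots> \<le> mixnorm_enn ss (\<lambda>y. ennreal cP * F y)"
        unfolding mixnorm_enn_def using ss s2 by (intro mixnorm_mono) auto
      also have "\<dots> = ennreal cP * mixnorm_enn ss F"
        unfolding mixnorm_enn_def using ss by (intro mixnorm_cmult) auto
      also have "\<dots> \<le> ennreal cP * N" using bound[OF r(1)] by (intro mult_left_mono) (auto simp: F_def)
      finally show ?thesis .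
    qed
    have s4: "(\<integral>\<^sup>+y. Gk y \<partial>Rn n) \<le> ennreal cK * mixnorm_enn ss Gk"
      unfolding cK_def S_def
    proof (rule holder_Rn_const[OF ss len2 _ _ Gkm, of "2*(R+1)" "\<lambda>_. R+1" "\<lambda>_. -(R+1)"])
      fix y assume "y \<notin> boxset {..<n} (\<lambda>_. -(R+1)) (\<lambda>_. R+1)"
      then have "y \<notin> K" by (auto simp: K_def cube_def boxset_def PiE_iff)
      then show "Gk y = 0" by (simp add: Gk_def H_def)
    qed (use R in auto)
    have s5: "ennreal ((r/n)^n) * m \<le> (\<integral>\<^sup>+y. Gk y \<partial>Rn n)"
    proof -
      have "(\<integral>\<^sup>+y. Gk y \<partial>Rn n) = (\<integral>\<^sup>+x. \<integral>\<^sup>+y. H y x \<partial>Rn n \<partial>Rn n)"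
        unfolding Gk_def by (rule Rnp.Fubini'[symmetric, OF Hm])
      also have "\<dots> \<ge> (\<integral>\<^sup>+x. ennreal ((r/n)^n) * (ennreal \<bar>f x\<bar> * indicator C x) \<partial>Rn n)"
      proof (intro nn_integral_mono)
        fix x assume x: "x \<in> space (Rn n)"
        show "ennreal ((r/n)^n) * (ennreal \<bar>f x\<bar> * indicator C x) \<le> (\<integral>\<^sup>+y. H y x \<partial>Rn n)"
        proof (cases "x \<in> C")
          case True
          have "(\<integral>\<^sup>+y. ennreal \<bar>f x\<bar> * indicator (Rball n x r) y \<partial>Rn n) \<le> (\<integral>\<^sup>+y. H y x \<partial>Rn n)"
          proof (intro nn_integral_mono)
            fix y assume y: "y \<in> space (Rn n)"
            show "ennreal \<bar>f x\<bar> * indicator (Rball n x r) y \<le> H y x"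
            proof (cases "y \<in> Rball n x r")
              case True
              then have "x \<in> Rball n y r" using Rball_sym[OF x y] by simp
              moreover have "y \<in> K" using Rball_in_bigger_cube[of x n R r y] True \<open>x \<in> C\<close> r
                by (simp add: C_def K_def)
              ultimately show ?thesis using True by (simp add: H_def)
            qed simp
          qed
          also have "(\<integral>\<^sup>+y. ennreal \<bar>f x\<bar> * indicator (Rball n x r) y \<partial>Rn n) = ennreal \<bar>f x\<bar> * emeasure (Rn n) (Rball n x r)"
            by (rule nn_integral_cmult_indicator) simp
          finally have A: "ennreal \<bar>f x\<bar> * emeasure (Rn n) (Rball n x r) \<le> (\<integral>\<^sup>+y. H y x \<partial>Rn n)" .
          have "ennreal ((r/n)^n) \<le> emeasure (Rn n) (Rball n x r)"
          proof -
            have "ennreal ((r/n)^n) = emeasure (Rn n) (cube n x (r / (2 * real n)))"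
              using r n by (subst emeasure_cube) (auto simp: field_simps)
            also have "\<dots> \<le> emeasure (Rn n) (Rball n x r)"
              by (rule emeasure_mono[OF cube_sub_Rball[OF n r(1)] Rball_sets])
            finally show ?thesis .
          qed
          then have "ennreal ((r/n)^n) * ennreal \<bar>f x\<bar> \<le> ennreal \<bar>f x\<bar> * emeasure (Rn n) (Rball n x r)"
            by (simp add: mult.commute mult_left_mono)
          then show ?thesis using A True by (simp add: mult.assoc)
        qed simp
      qed
      also have "(\<integral>\<^sup>+x. ennreal ((r/n)^n) * (ennreal \<bar>f x\<bar> * indicator C x) \<partial>Rn n) = ennreal ((r/n)^n) * m"
        unfolding m_def by (rule nn_integral_cmult) measurable
      finally show ?thesis .
    qed
    have "ennreal (cb * r powr E) * (ennreal ((r/n)^n) * ennreal \<mu>) \<le> ennreal (cb * r powr E) * (ennreal cK * mixnorm_enn ss Gk)"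
    proof (rule mult_left_mono)
      have "ennreal ((r/n)^n) * ennreal \<mu> \<le> ennreal ((r/n)^n) * m" using \<mu>(2) by (rule mult_left_mono) simp
      also have "\<dots> \<le> ennreal cK * mixnorm_enn ss Gk" using s4 s5 by (rule order_trans[rotated])
      finally show "ennreal ((r/n)^n) * ennreal \<mu> \<le> ennreal cK * mixnorm_enn ss Gk" .
    qed simp
    also have "\<dots> = ennreal cK * (ennreal (cb * r powr E) * mixnorm_enn ss Gk)" by (simp add: mult_ac)
    also have "\<dots> \<le> ennreal cK * (ennreal cP * N)" using s3 by (intro mult_left_mono) auto
    finally have "ennreal (cb * r powr E * (r/n)^n * \<mu>) \<le> ennreal (cK * cP * N')"
      using cb \<mu> r cK cP NN by (simp add: ennreal_mult mult.assoc)
    then have i1: "cb * r powr E * (r/n)^n * \<mu> \<le> cK * cP * N'"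
      using cK cP NN by (subst (asm) ennreal_le_iff) auto
    have rn: "(r/n)^n = r powr real n * n powr (-real n)"
    proof -
      have "(r/n)^n = (r/n) powr real n" using r n by (simp add: powr_realpow)
      also have "\<dots> = r powr real n / n powr real n" using r by (simp add: powr_divide)
      finally show ?thesis by (simp add: powr_minus divide_inverse)
    qed
    have cPe: "cP = 2 powr (real n - P) * r powr (real n - P)" using r by (simp add: cP_def powr_mult)
    have rE: "r powr E * r powr real n = r powr (E + P) * r powr (real n - P)"
      by (simp add: powr_add[symmetric])
    have "r powr (real n - P) * (cb * \<mu> * n powr (-real n) * r powr (E + P)) = cb * r powr E * (r/n)^n * \<mu>"
      unfolding rn by (simp add: mult_ac rE[symmetric])
    also have "\<dots> \<le> cK * cP * N'" by (rule i1)
    also have "\<dots> = r powr (real n - P) * (cK * 2 powr (real n - P) * N')" unfolding cPe by (simp add: mult_ac)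
    finally show ?thesis using r by (subst (asm) mult_le_cancel_left_pos) auto
  qed
  have pos: "cb * \<mu> * n powr (-real n) > 0" using cb \<mu> n by simp
  have d: "E + P < 0" using lt EP by simp
  obtain r where r: "r \<le> 1" "r > 0" "cb * \<mu> * n powr (-real n) * r powr (E + P) > cK * 2 powr (real n - P) * N'"
    using small_r_exists[OF pos d, of 1 "cK * 2 powr (real n - P) * N'"] by auto
  then show False using key[OF r(2) r(1)] by simp
qed

theorem proposition2p3:
  fixes ps ss :: "ereal list" and \<alpha> :: ereal
  assumes "length ps = n" and "length ss = n" and "n \<ge> 1"
    and "\<forall>p\<in>set ps. 1 \<le> p" and "\<forall>s\<in>set ss. 1 \<le> s" and "1 \<le> \<alpha>"
  shows "(\<exists>f \<in> amalgam_space ps ss \<alpha>. \<not> (AE x in Rn n. f x = 0)) \<longleftrightarrow>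
         ((\<Sum>s\<leftarrow>ss. inv_exp s) / real n \<le> inv_exp \<alpha> \<and>
          inv_exp \<alpha> \<le> (\<Sum>p\<leftarrow>ps. inv_exp p) / real n)"
proof
  assume "\<exists>f \<in> amalgam_space ps ss \<alpha>. \<not> (AE x in Rn n. f x = 0)"
  then obtain f where f: "f \<in> amalgam_space ps ss \<alpha>" and nAE: "\<not> (AE x in Rn n. f x = 0)" by blast
  have fm: "f \<in> borel_measurable (Rn n)" using f assms(1) by (simp add: amalgam_space_def L1loc_def)
  define N where "N = amalgam_norm ps ss \<alpha> f"
  have N: "N < top" using f by (simp add: amalgam_space_def N_def)
  define e where "e = inv_exp \<alpha> - (\<Sum>p\<leftarrow>ps. inv_exp p) / real n - (\<Sum>s\<leftarrow>ss. inv_exp s) / real n"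
  have bound: "mixnorm_enn ss (\<lambda>y. ennreal (measure (Rn n) (Rball n y r) powr e) *
                 mixnorm ps (\<lambda>x. indicator (Rball n y r) x * f x)) \<le> N" if r: "r > 0" for r
    unfolding N_def amalgam_norm_def Let_def assms(1) e_def[symmetric]
    using r by (intro SUP_upper) auto
  have n1: "n * inv_exp \<alpha> \<le> (\<Sum>p\<leftarrow>ps. inv_exp p)"
    by (rule nec_P[OF assms(4) assms(1) assms(5) assms(2) assms(3) fm nAE bound N e_def]) auto
  have n2: "(\<Sum>s\<leftarrow>ss. inv_exp s) \<le> n * inv_exp \<alpha>"
    by (rule nec_S[OF assms(4) assms(1) assms(5) assms(2) assms(3) fm nAE bound N e_def]) auto
  show "(\<Sum>s\<leftarrow>ss. inv_exp s) / real n \<le> inv_exp \<alpha> \<and> inv_exp \<alpha> \<le> (\<Sum>p\<leftarrow>ps. inv_exp p) / real n"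
    using n1 n2 assms(3) by (simp add: field_simps)
next
  assume "(\<Sum>s\<leftarrow>ss. inv_exp s) / real n \<le> inv_exp \<alpha> \<and> inv_exp \<alpha> \<le> (\<Sum>p\<leftarrow>ps. inv_exp p) / real n"
  then show "\<exists>f \<in> amalgam_space ps ss \<alpha>. \<not> (AE x in Rn n. f x = 0)"
    using sufficiency[OF assms(1,2,3,4,5)] by blast
qed

end
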